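(* Let $\rho$ be a state supported on $\Omega=\{|-\rangle,|+\rangle,\varphi_{0_1},\varphi_{0_N}\}^\perp$. Then $\rho$ is invariant if and only if, for every $k=1,\dots,N-1$, $\rho$ commutes with $|Z|_k$ and with $P_{k+1}$ and satisfies $$Z_k^*\rho Z_k=e^{\beta_k}\rho|Z|_k .$$ In this case $\rho$ commutes with the Hamiltonian $H_S=\varepsilon_-P_-+\varepsilon_+P_++\sum_{k=1}^N\varepsilon_kP_k$.
   Context: Fix integers $N\ge 2$ and $n_1\ge n_2\ge\dots\ge n_N\ge 1$. Let $\mathcal H$ be a finite-dimensional complex Hilbert space with orthonormal basis $\{|-\rangle,|+\rangle\}\cup\{|a_k\rangle:1\le k\le N,\ 0\le a\le n_k-1\}$. For vectors $x,y$, $|x\rangle\langle y|$ denotes the operator $u\mapsto\langle y,u\rangle x$. Put $E_k=\mathrm{span}\{|a_k\rangle:0\le a\le n_k-1\}$, $P_k$ the orthogonal projection onto $E_k$, $P_\pm=|\pm\rangle\langle\pm|$, $\zeta_k=e^{2\pi i/n_k}$, and $\varphi_{a_k}=n_k^{-1/2}\sum_{b=0}^{n_k-1}\zeta_k^{-ba}|b_k\rangle$ for $0\le a\le n_k-1$. For $1\le k\le N-1$ let $Z_k=n_k^{-1/2}\sum_{b=0}^{n_{k+1}-1}\sum_{a=0}^{n_k-1}\zeta_k^{ba}|b_{k+1}\rangle\langle a_k|$ (an operator on $\mathcal H$), $|Z|_k=Z_k^*Z_k$. The energies $\varepsilon_-,\varepsilon_+,\varepsilon_1,\dots,\varepsilon_N$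 are real, pairwise distinct, with $\varepsilon_-<\varepsilon_{k+1}<\varepsilon_k<\varepsilon_+$; the Bohr frequencies $\omega_+=\varepsilon_+-\varepsilon_1$, $\omega_k=\varepsilon_k-\varepsilon_{k+1}$ ($1\le k\le N-1$), $\omega_-=\varepsilon_N-\varepsilon_-$ are assumed pairwise distinct. Let $\omega$ range over $\{\omega_+,\omega_-,\omega_1,\dots,\omega_{N-1}\}$, and let $\Gamma_{\pm,\omega}>0$, $\gamma_{\pm,\omega}\in\mathbb R$ be constants. Kraus operators: $L_{-,\omega_+}=\sqrt{n_1\Gamma_{-,\omega_+}}|\varphi_{0_1}\rangle\langle +|$, $L_{+,\omega_+}=\sqrt{n_1\Gamma_{+,\omega_+}}|+\rangle\langle\varphi_{0_1}|$, $L_{-,\omega_k}=\sqrt{\Gamma_{-,\omega_k}}Z_k$, $L_{+,\omega_k}=\sqrt{\Gamma_{+,\omega_k}}Z_k^*$ ($1\le k\le N-1$), $L_{-,\omega_-}=\sqrt{\Gamma_{-,\omega_-}}|-\rangle\langle\varphi_{0_N}|$, $L_{+,\omega_-}=0$. Effective Hamiltonian $H_{\mathrm{eff}}=n_1\gamma_{-,\omega_+}P_+-n_1\gamma_{+,\omega_+}|\varphi_{0_1}\rangle\langle\varphi_{0_1}|+\gamma_{-,\omega_-}|\varphi_{0_N}\rangle\langle\varphi_{0_N}|-\gamma_{+,\omega_-}P_-+\sum_{k=1}^{N-1}(\gamma_{-,\omega_k}|Z|_k-\gamma_{+,\omega_k}P_{k+1})$. The generator is $\mathcal L(\rho)=-i[H_{\mathrm{eff}},\rho]+\sum_{\omega}\sum_{\epsilon=\pm}\big(L_{\epsilon,\omega}\rho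 L_{\epsilon,\omega}^*-\tfrac12\{L_{\epsilon,\omega}^*L_{\epsilon,\omega},\rho\}\big)$. A state is a positive operator of trace one; it is invariant if $\mathcal L(\rho)=0$; an operator is supported on a subspace $E$ if its range is contained in $E$. Define $\beta_k$ by $e^{\beta_k}=\Gamma_{-,\omega_k}/\Gamma_{+,\omega_k}$ for $1\le k\le N-1$. *)

theory Defs
  imports Complex_Main
begin

(* Orthonormal basis of H: |->  = Mi, |+> = Pl, |a_k> = Bs k a  (1 <= k <= N, a < n k).
   Vectors are coefficient functions, operators are matrices of entries <i|A|j>. *)
datatype idx = Mi | Pl | Bs nat nat

type_synonym vec = "idx \<Rightarrow> complex"
type_synonym op = "idx \<Rightarrow> idx \<Rightarrow> complex"

definition basis :: "nat \<Rightarrow> (nat \<Rightarrow> nat) \<Rightarrow> idx set" where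
  "basis N n = {Mi, Pl} \<union> {Bs k a | k a. 1 \<le> k \<and> k \<le> N \<and> a < n k}"

definition is_vec :: "nat \<Rightarrow> (nat \<Rightarrow> nat) \<Rightarrow> vec \<Rightarrow> bool" where
  "is_vec N n v \<longleftrightarrow> (\<forall>i. i \<notin> basis N n \<longrightarrow> v i = 0)"

definition is_op :: "nat \<Rightarrow> (nat \<Rightarrow> nat) \<Rightarrow> op \<Rightarrow> bool" where
  "is_op N n A \<longleftrightarrow> (\<forall>i j. i \<notin> basis N n \<or> j \<notin> basis N n \<longrightarrow> A i j = 0)"

definition inner :: "nat \<Rightarrow> (nat \<Rightarrow> nat) \<Rightarrow> vec \<Rightarrow> vec \<Rightarrow> complex" where
  "inner N n v w = (\<Sum>i\<in>basis N n. cnj (v i) * w i)"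

definition app :: "nat \<Rightarrow> (nat \<Rightarrow> nat) \<Rightarrow> op \<Rightarrow> vec \<Rightarrow> vec" where
  "app N n A v = (\<lambda>i. \<Sum>j\<in>basis N n. A i j * v j)"

definition mmul :: "nat \<Rightarrow> (nat \<Rightarrow> nat) \<Rightarrow> op \<Rightarrow> op \<Rightarrow> op" where
  "mmul N n A C = (\<lambda>i j. \<Sum>l\<in>basis N n. A i l * C l j)"

definition adj :: "op \<Rightarrow> op" where
  "adj A = (\<lambda>i j. cnj (A j i))"

definition trace :: "nat \<Rightarrow> (nat \<Rightarrow> nat) \<Rightarrow> op \<Rightarrow> complex" where
  "trace N n A = (\<Sum>i\<in>basis N n. A i i)"

definition outer :: "vec \<Rightarrow> vec \<Rightarrow> op" where
  "outer v w = (\<lambda>i j. v i * cnj (w j))"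

definition ket :: "idx \<Rightarrow> vec" where
  "ket i = (\<lambda>j. if j = i then 1 else 0)"

definition proj :: "(nat \<Rightarrow> nat) \<Rightarrow> nat \<Rightarrow> op" where
  "proj n k = (\<lambda>i j. if i = j \<and> (\<exists>a. i = Bs k a \<and> a < n k) then 1 else 0)"

definition zeta :: "(nat \<Rightarrow> nat) \<Rightarrow> nat \<Rightarrow> complex" where
  "zeta n k = exp (2 * complex_of_real pi * \<i> / of_nat (n k))"

definition phi :: "(nat \<Rightarrow> nat) \<Rightarrow> nat \<Rightarrow> nat \<Rightarrow> vec" where
  "phi n k a = (\<lambda>i. case i of
      Bs k' b \<Rightarrow> if k' = k \<and> b < n k
                  then inverse (zeta n k ^ (b * a)) / complex_of_real (sqrt (real (n k))) else 0
    | _ \<Rightarrow> 0)"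

definition Zop :: "(nat \<Rightarrow> nat) \<Rightarrow> nat \<Rightarrow> op" where
  "Zop n k = (\<lambda>i j. case (i, j) of
      (Bs k1 b, Bs k2 a) \<Rightarrow>
         if k1 = Suc k \<and> k2 = k \<and> b < n (Suc k) \<and> a < n k
         then zeta n k ^ (b * a) / complex_of_real (sqrt (real (n k))) else 0
    | _ \<Rightarrow> 0)"

definition absZ :: "nat \<Rightarrow> (nat \<Rightarrow> nat) \<Rightarrow> nat \<Rightarrow> op" where
  "absZ N n k = mmul N n (adj (Zop n k)) (Zop n k)"

definition omega_p :: "real \<Rightarrow> (nat \<Rightarrow> real) \<Rightarrow> real" where
  "omega_p ep e = ep - e 1"
definition omega_m :: "nat \<Rightarrow> real \<Rightarrow> (nat \<Rightarrow> real) \<Rightarrow> real" where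
  "omega_m N em e = e N - em"
definition omega :: "(nat \<Rightarrow> real) \<Rightarrow> nat \<Rightarrow> real" where
  "omega e k = e k - e (Suc k)"

(* Effective Hamiltonian; gp = gamma_{+,.}, gm = gamma_{-,.} *)
definition Heff :: "nat \<Rightarrow> (nat \<Rightarrow> nat) \<Rightarrow> real \<Rightarrow> real \<Rightarrow> (nat \<Rightarrow> real)
    \<Rightarrow> (real \<Rightarrow> real) \<Rightarrow> (real \<Rightarrow> real) \<Rightarrow> op" where
  "Heff N n em ep e gp gm = (\<lambda>i j.
       of_nat (n 1) * of_real (gm (omega_p ep e)) * outer (ket Pl) (ket Pl) i j
     - of_nat (n 1) * of_real (gp (omega_p ep e)) * outer (phi n 1 0) (phi n 1 0) i j
     + of_real (gm (omega_m N em e)) * outer (phi n N 0) (phi n N 0) i j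
     - of_real (gp (omega_m N em e)) * outer (ket Mi) (ket Mi) i j
     + (\<Sum>k\<in>{1..N-1}. of_real (gm (omega e k)) * absZ N n k i j
                      - of_real (gp (omega e k)) * proj n (Suc k) i j))"

definition dissip :: "nat \<Rightarrow> (nat \<Rightarrow> nat) \<Rightarrow> op \<Rightarrow> op \<Rightarrow> op" where
  "dissip N n L \<rho> = (\<lambda>i j.
       mmul N n (mmul N n L \<rho>) (adj L) i j
     - (mmul N n (mmul N n (adj L) L) \<rho> i j + mmul N n \<rho> (mmul N n (adj L) L) i j) / 2)"

definition scal :: "complex \<Rightarrow> op \<Rightarrow> op" where
  "scal c A = (\<lambda>i j. c * A i j)"

(* Kraus operators; Gp = Gamma_{+,.}, Gm = Gamma_{-,.} *)
definition L_m_wp :: "(nat \<Rightarrow> nat) \<Rightarrow> real \<Rightarrow> (nat \<Rightarrow> real) \<Rightarrow> (real \<Rightarrow> real) \<Rightarrow> op" where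
  "L_m_wp n ep e Gm = scal (of_real (sqrt (real (n 1) * Gm (omega_p ep e)))) (outer (phi n 1 0) (ket Pl))"
definition L_p_wp :: "(nat \<Rightarrow> nat) \<Rightarrow> real \<Rightarrow> (nat \<Rightarrow> real) \<Rightarrow> (real \<Rightarrow> real) \<Rightarrow> op" where
  "L_p_wp n ep e Gp = scal (of_real (sqrt (real (n 1) * Gp (omega_p ep e)))) (outer (ket Pl) (phi n 1 0))"
definition L_m_wk :: "(nat \<Rightarrow> nat) \<Rightarrow> (nat \<Rightarrow> real) \<Rightarrow> (real \<Rightarrow> real) \<Rightarrow> nat \<Rightarrow> op" where
  "L_m_wk n e Gm k = scal (of_real (sqrt (Gm (omega e k)))) (Zop n k)"
definition L_p_wk :: "(nat \<Rightarrow> nat) \<Rightarrow> (nat \<Rightarrow> real) \<Rightarrow> (real \<Rightarrow> real) \<Rightarrow> nat \<Rightarrow> op" where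
  "L_p_wk n e Gp k = scal (of_real (sqrt (Gp (omega e k)))) (adj (Zop n k))"
definition L_m_wm :: "nat \<Rightarrow> (nat \<Rightarrow> nat) \<Rightarrow> real \<Rightarrow> (nat \<Rightarrow> real) \<Rightarrow> (real \<Rightarrow> real) \<Rightarrow> op" where
  "L_m_wm N n em e Gm = scal (of_real (sqrt (Gm (omega_m N em e)))) (outer (ket Mi) (phi n N 0))"
definition L_p_wm :: "op" where
  "L_p_wm = (\<lambda>i j. 0)"

definition gen :: "nat \<Rightarrow> (nat \<Rightarrow> nat) \<Rightarrow> real \<Rightarrow> real \<Rightarrow> (nat \<Rightarrow> real)
    \<Rightarrow> (real \<Rightarrow> real) \<Rightarrow> (real \<Rightarrow> real) \<Rightarrow> (real \<Rightarrow> real) \<Rightarrow> (real \<Rightarrow> real) \<Rightarrow> op \<Rightarrow> op" where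
  "gen N n em ep e Gp Gm gp gm \<rho> = (\<lambda>i j.
       - \<i> * (mmul N n (Heff N n em ep e gp gm) \<rho> i j - mmul N n \<rho> (Heff N n em ep e gp gm) i j)
     + dissip N n (L_m_wp n ep e Gm) \<rho> i j + dissip N n (L_p_wp n ep e Gp) \<rho> i j
     + dissip N n (L_m_wm N n em e Gm) \<rho> i j + dissip N n L_p_wm \<rho> i j
     + (\<Sum>k\<in>{1..N-1}. dissip N n (L_m_wk n e Gm k) \<rho> i j + dissip N n (L_p_wk n e Gp k) \<rho> i j))"

definition is_state :: "nat \<Rightarrow> (nat \<Rightarrow> nat) \<Rightarrow> op \<Rightarrow> bool" where
  "is_state N n \<rho> \<longleftrightarrow> is_op N n \<rho>
     \<and> (\<forall>v. is_vec N n v \<longrightarrow> Im (inner N n v (app N n \<rho> v)) = 0 \<and> 0 \<le> Re (inner N n v (app N n \<rho> v)))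
     \<and> trace N n \<rho> = 1"

definition invariant :: "nat \<Rightarrow> (nat \<Rightarrow> nat) \<Rightarrow> real \<Rightarrow> real \<Rightarrow> (nat \<Rightarrow> real)
    \<Rightarrow> (real \<Rightarrow> real) \<Rightarrow> (real \<Rightarrow> real) \<Rightarrow> (real \<Rightarrow> real) \<Rightarrow> (real \<Rightarrow> real) \<Rightarrow> op \<Rightarrow> bool" where
  "invariant N n em ep e Gp Gm gp gm \<rho> \<longleftrightarrow> gen N n em ep e Gp Gm gp gm \<rho> = (\<lambda>i j. 0)"

(* range of rho contained in Omega = {|->, |+>, phi_{0_1}, phi_{0_N}}^perp *)
definition supported_Omega :: "nat \<Rightarrow> (nat \<Rightarrow> nat) \<Rightarrow> op \<Rightarrow> bool" where
  "supported_Omega N n \<rho> \<longleftrightarrow> (\<forall>v. is_vec N n v \<longrightarrow>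
     (\<forall>u\<in>{ket Mi, ket Pl, phi n 1 0, phi n N 0}. inner N n u (app N n \<rho> v) = 0))"

definition commutes :: "nat \<Rightarrow> (nat \<Rightarrow> nat) \<Rightarrow> op \<Rightarrow> op \<Rightarrow> bool" where
  "commutes N n A B \<longleftrightarrow> mmul N n A B = mmul N n B A"

definition HS :: "nat \<Rightarrow> (nat \<Rightarrow> nat) \<Rightarrow> real \<Rightarrow> real \<Rightarrow> (nat \<Rightarrow> real) \<Rightarrow> op" where
  "HS N n em ep e = (\<lambda>i j. of_real em * outer (ket Mi) (ket Mi) i j + of_real ep * outer (ket Pl) (ket Pl) i j
      + (\<Sum>k\<in>{1..N}. of_real (e k) * proj n k i j))"

(* e^{beta_k} = Gamma_{-,omega_k} / Gamma_{+,omega_k} *)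
definition beta :: "(nat \<Rightarrow> real) \<Rightarrow> (real \<Rightarrow> real) \<Rightarrow> (real \<Rightarrow> real) \<Rightarrow> nat \<Rightarrow> real" where
  "beta e Gp Gm k = ln (Gm (omega e k) / Gp (omega e k))"

end

theory Submission
  imports Defs "HOL-Library.Function_Algebras"
begin


lemma finite_basis: "finite (basis N n)"
proof -
  have "{Bs k a | k a. 1 \<le> k \<and> k \<le> N \<and> a < n k} = (\<Union>k\<in>{1..N}. Bs k ` {..<n k})" by auto
  then show ?thesis unfolding basis_def by simp
qed

lemma op_sum_apply: "(sum F K) i j = (\<Sum>k\<in>K. (F k :: op) i j)"
  by (induction K rule: infinite_finite_induct) auto

lemma op_eqI: "(\<And>i j. A i j = C i j) \<Longrightarrow> A = (C::op)" by (intro ext)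

lemma mmul_assoc: "mmul N n (mmul N n A C) D = mmul N n A (mmul N n C D)"
  unfolding mmul_def
  apply (intro op_eqI)
  apply (simp add: sum_distrib_left sum_distrib_right mult.assoc)
  apply (rule sum.swap)
  done

lemma mmul_add_left: "mmul N n (A + C) D = mmul N n A D + mmul N n C D"
  unfolding mmul_def by (intro op_eqI) (simp add: distrib_right sum.distrib)
lemma mmul_add_right: "mmul N n D (A + C) = mmul N n D A + mmul N n D C"
  unfolding mmul_def by (intro op_eqI) (simp add: distrib_left sum.distrib)
lemma mmul_diff_left: "mmul N n (A - C) D = mmul N n A D - mmul N n C D"
  unfolding mmul_def by (intro op_eqI) (simp add: left_diff_distrib sum_subtractf)
lemma mmul_diff_right: "mmul N n D (A - C) = mmul N n D A - mmul N n D C"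
  unfolding mmul_def by (intro op_eqI) (simp add: right_diff_distrib sum_subtractf)
lemma mmul_uminus_left: "mmul N n (- A) D = - mmul N n A D"
  unfolding mmul_def by (intro op_eqI) (simp add: sum_negf)
lemma mmul_uminus_right: "mmul N n D (- A) = - mmul N n D A"
  unfolding mmul_def by (intro op_eqI) (simp add: sum_negf)
lemma mmul_scal_left: "mmul N n (scal c A) D = scal c (mmul N n A D)"
  unfolding mmul_def scal_def by (intro op_eqI) (simp add: sum_distrib_left mult.assoc)
lemma mmul_scal_right: "mmul N n D (scal c A) = scal c (mmul N n D A)"
  unfolding mmul_def scal_def by (intro op_eqI) (simp add: sum_distrib_left mult.assoc mult.left_commute)
lemma mmul_zero_left: "mmul N n 0 D = 0"
  unfolding mmul_def by (intro op_eqI) simp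
lemma mmul_zero_right: "mmul N n D 0 = 0"
  unfolding mmul_def by (intro op_eqI) simp
lemma mmul_sum_left: "mmul N n (sum F K) D = (\<Sum>k\<in>K. mmul N n (F k) D)"
  unfolding mmul_def by (intro op_eqI) (simp add: op_sum_apply sum_distrib_right sum.swap[of _ K])
lemma mmul_sum_right: "mmul N n D (sum F K) = (\<Sum>k\<in>K. mmul N n D (F k))"
  unfolding mmul_def by (intro op_eqI) (simp add: op_sum_apply sum_distrib_left sum.swap[of _ K])

lemma scal_add: "scal c (A + C) = scal c A + scal c C"
  unfolding scal_def by (intro op_eqI) (simp add: distrib_left)
lemma scal_diff: "scal c (A - C) = scal c A - scal c C"
  unfolding scal_def by (intro op_eqI) (simp add: right_diff_distrib)
lemma scal_scal: "scal c (scal d A) = scal (c * d) A"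
  unfolding scal_def by (intro op_eqI) simp
lemma scal_zero: "scal c 0 = 0" unfolding scal_def by (intro op_eqI) simp
lemma scal_zero': "scal 0 A = 0" unfolding scal_def by (intro op_eqI) simp
lemma scal_one: "scal 1 A = A" unfolding scal_def by (intro op_eqI) simp
lemma scal_sum: "scal c (sum F K) = (\<Sum>k\<in>K. scal c (F k))"
  unfolding scal_def by (intro op_eqI) (simp add: op_sum_apply sum_distrib_left)
lemma scal_addc: "scal (c + d) A = scal c A + scal d A"
  unfolding scal_def by (intro op_eqI) (simp add: distrib_right)
lemma scal_diffc: "scal (c - d) A = scal c A - scal d A"
  unfolding scal_def by (intro op_eqI) (simp add: left_diff_distrib)
lemma scal_uminus: "scal c (- A) = - scal c A" unfolding scal_def by (intro op_eqI) simp
lemma scal_eq0: "scal c A = 0 \<Longrightarrow> c \<noteq> 0 \<Longrightarrow> A = 0"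
  unfolding scal_def by (intro op_eqI) (metis mult_eq_0_iff zero_fun_apply)

lemma adj_mmul: "adj (mmul N n A C) = mmul N n (adj C) (adj A)"
  unfolding mmul_def adj_def by (intro op_eqI) (simp add: mult.commute)
lemma adj_adj: "adj (adj A) = A" unfolding adj_def by (intro op_eqI) simp
lemma adj_scal: "adj (scal c A) = scal (cnj c) (adj A)" unfolding adj_def scal_def by (intro op_eqI) simp


lemma geo_zero: fixes w :: complex assumes "w \<noteq> 1" "w ^ m = 1" shows "(\<Sum>a<m. w ^ a) = 0"
  using geometric_sum[OF assms(1), of m] assms(2) by simp

lemma root_pow: fixes m d :: nat assumes "0 < m"
  shows "exp (2 * complex_of_real pi * \<i> / of_nat m) ^ d = exp (complex_of_real (2 * pi * real d / real m) * \<i>)"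
proof -
  have "exp (2 * complex_of_real pi * \<i> / of_nat m) ^ d = exp (of_nat d * (2 * complex_of_real pi * \<i> / of_nat m))"
    by (rule exp_of_nat_mult[symmetric])
  also have "of_nat d * (2 * complex_of_real pi * \<i> / of_nat m) = complex_of_real (2 * pi * real d / real m) * \<i>"
    by simp
  finally show ?thesis .
qed

lemma root_ne1: fixes m d :: nat assumes "0 < d" "d < m"
  shows "exp (2 * complex_of_real pi * \<i> / of_nat m) ^ d \<noteq> 1"
proof
  assume "exp (2 * complex_of_real pi * \<i> / of_nat m) ^ d = 1"
  then have "exp (complex_of_real (2 * pi * real d / real m) * \<i>) = 1" using root_pow[of m d] assms by simp
  then have "Re (exp (complex_of_real (2 * pi * real d / real m) * \<i>)) = 1" by simp
  then have "cos (2 * pi * real d / real m) = 1" by (simp add: Re_exp)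
  then obtain j :: int where j: "2 * pi * real d / real m = of_int j * 2 * pi"
    unfolding cos_one_2pi_int by auto
  have "real d / real m = (2 * pi * real d / real m) / (2 * pi)" by simp
  also have "\<dots> = of_int j" using j by simp
  finally have "real d / real m = of_int j" .
  moreover have "0 < real d / real m" "real d / real m < 1" using assms by auto
  ultimately have "0 < j" "j < 1" by simp_all
  then show False by simp
qed

lemma root_m: fixes m :: nat assumes "0 < m"
  shows "exp (2 * complex_of_real pi * \<i> / of_nat m) ^ m = 1"
  using root_pow[OF assms, of m] assms by simp

lemma root_norm: "norm (exp (2 * complex_of_real pi * \<i> / of_nat m)) = 1"
  by (simp add: norm_exp_eq_Re)

lemma zeta_sum:
  fixes m b b' :: nat
  assumes m: "0 < m" and b: "b < m" "b' < m"
  defines "z \<equiv> exp (2 * complex_of_real pi * \<i> / of_nat m)"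
  shows "(\<Sum>a<m. z ^ (b * a) * cnj (z ^ (b' * a))) = (if b = b' then of_nat m else 0)"
proof -
  have nz: "z \<noteq> 0" unfolding z_def by simp
  have "z * cnj z = 1" using root_norm[of m] complex_norm_square[of z] unfolding z_def by simp
  then have cz: "cnj z = inverse z" using inverse_unique by metis
  have t: "z ^ (b * a) * cnj (z ^ (b' * a)) = z ^ (b * a) / z ^ (b' * a)" for a
    by (simp add: cz divide_inverse power_inverse)
  show ?thesis
  proof (cases "b = b'")
    case True
    have "z ^ (b * a) * cnj (z ^ (b' * a)) = 1" for a
    proof -
      have "z ^ (b * a) * cnj (z ^ (b' * a)) = z ^ (b * a) / z ^ (b' * a)" by (rule t)
      also have "\<dots> = 1" using nz True by simp
      finally show ?thesis .
    qed
    then show ?thesis using True by simp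
  next
    case False
    show ?thesis
    proof (cases "b' < b")
      case True
      let ?w = "z ^ (b - b')"
      have we: "z ^ (b * a) / z ^ (b' * a) = ?w ^ a" for a
      proof -
        have "b * a = (b - b') * a + b' * a" using True by (simp add: diff_mult_distrib)
        then show ?thesis using nz by (simp add: power_add power_mult)
      qed
      moreover have "?w \<noteq> 1" unfolding z_def using True b by (intro root_ne1) auto
      moreover have "?w ^ m = 1"
        by (metis m power_mult mult.commute power_one root_m z_def)
      ultimately have "(\<Sum>a<m. ?w ^ a) = 0" using geo_zero by blast
      moreover have "z ^ (b * a) * cnj (z ^ (b' * a)) = ?w ^ a" for a by (simp only: t we)
      ultimately show ?thesis using False by simp
    next
      case F2: False
      then have lt: "b < b'" using False by simp
      let ?w = "inverse (z ^ (b' - b))"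
      have we: "z ^ (b * a) / z ^ (b' * a) = ?w ^ a" for a
      proof -
        have "b' * a = (b' - b) * a + b * a" using lt by (simp add: diff_mult_distrib)
        then show ?thesis using nz by (simp add: power_add power_mult power_inverse field_simps flip: power_mult power_mult_distrib)
      qed
      moreover have "?w \<noteq> 1" using root_ne1[of "b' - b" m] lt b unfolding z_def by auto
      moreover have "?w ^ m = 1"
        by (metis m power_mult mult.commute power_one root_m z_def power_inverse inverse_1)
      ultimately have "(\<Sum>a<m. ?w ^ a) = 0" using geo_zero by blast
      moreover have "z ^ (b * a) * cnj (z ^ (b' * a)) = ?w ^ a" for a by (simp only: t we)
      ultimately show ?thesis using False by simp
    qed
  qed
qed



definition inlev :: "(nat \<Rightarrow> nat) \<Rightarrow> nat \<Rightarrow> idx \<Rightarrow> bool" where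
  "inlev n j i \<longleftrightarrow> (\<exists>a. i = Bs j a \<and> a < n j)"

lemma inlev_basis: "inlev n j i \<Longrightarrow> 1 \<le> j \<Longrightarrow> j \<le> N \<Longrightarrow> i \<in> basis N n"
  unfolding inlev_def basis_def by auto

lemma proj_left: assumes "1 \<le> j" "j \<le> N"
  shows "mmul N n (proj n j) A = (\<lambda>i m. if inlev n j i then A i m else 0)"
proof (intro op_eqI)
  fix i m
  have "(\<Sum>l\<in>basis N n. proj n j i l * A l m) = (\<Sum>l\<in>basis N n. if l = i then (if inlev n j i then A i m else 0) else 0)"
    by (intro sum.cong) (auto simp: proj_def inlev_def)
  also have "\<dots> = (if inlev n j i then A i m else 0)"
    using inlev_basis[OF _ assms] by (auto simp: finite_basis)
  finally show "mmul N n (proj n j) A i m = (if inlev n j i then A i m else 0)" unfolding mmul_def .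
qed

lemma proj_right: assumes "1 \<le> j" "j \<le> N"
  shows "mmul N n A (proj n j) = (\<lambda>i m. if inlev n j m then A i m else 0)"
proof (intro op_eqI)
  fix i m
  have "(\<Sum>l\<in>basis N n. A i l * proj n j l m) = (\<Sum>l\<in>basis N n. if l = m then (if inlev n j m then A i m else 0) else 0)"
    by (intro sum.cong) (auto simp: proj_def inlev_def)
  also have "\<dots> = (if inlev n j m then A i m else 0)"
    using inlev_basis[OF _ assms] by (auto simp: finite_basis)
  finally show "mmul N n A (proj n j) i m = (if inlev n j m then A i m else 0)" unfolding mmul_def .
qed

lemma sum_level:
  assumes "1 \<le> k" "k \<le> N" "\<And>l. l \<in> basis N n \<Longrightarrow> l \<notin> Bs k ` {..<n k} \<Longrightarrow> f l = 0"
  shows "sum f (basis N n) = (\<Sum>a<n k. f (Bs k a))"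
proof -
  have sub: "Bs k ` {..<n k} \<subseteq> basis N n" using assms(1,2) by (auto simp: basis_def)
  have "sum f (basis N n) = sum f (Bs k ` {..<n k})"
    by (rule sum.mono_neutral_left[symmetric]) (use sub assms(3) finite_basis in auto)
  also have "\<dots> = (\<Sum>a<n k. f (Bs k a))" by (subst sum.reindex) (auto simp: inj_on_def)
  finally show ?thesis .
qed

lemma Zop_nz: "Zop n k i m \<noteq> 0 \<Longrightarrow> \<exists>b a. i = Bs (Suc k) b \<and> m = Bs k a \<and> b < n (Suc k) \<and> a < n k"
  by (cases i; cases m) (auto simp: Zop_def split: if_splits)

lemma Zop_Bs: "Zop n k (Bs (Suc k) b) (Bs k a) = (if b < n (Suc k) \<and> a < n k
         then zeta n k ^ (b * a) / complex_of_real (sqrt (real (n k))) else 0)"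
  by (simp add: Zop_def)

lemma adj_proj: "adj (proj n j) = proj n j"
  unfolding adj_def proj_def by (intro op_eqI) auto

lemma Zop_col: "l \<notin> Bs k ` {..<n k} \<Longrightarrow> Zop n k i l = 0"
  by (metis Zop_nz image_eqI lessThan_iff)

lemma ZZs:
  assumes k: "1 \<le> k" "k < N" and n_mono: "n (Suc k) \<le> n k" and npos: "1 \<le> n k"
  shows "mmul N n (Zop n k) (adj (Zop n k)) = proj n (Suc k)"
proof (intro op_eqI)
  fix i m
  show "mmul N n (Zop n k) (adj (Zop n k)) i m = proj n (Suc k) i m"
  proof (cases "\<exists>b b'. i = Bs (Suc k) b \<and> m = Bs (Suc k) b' \<and> b < n (Suc k) \<and> b' < n (Suc k)")
    case True
    then obtain b b' where bb: "i = Bs (Suc k) b" "m = Bs (Suc k) b'" "b < n (Suc k)" "b' < n (Suc k)" by blast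
    define s where "s = complex_of_real (sqrt (real (n k)))"
    have ss: "s * s = of_nat (n k)" unfolding s_def of_real_mult[symmetric] real_sqrt_mult_self by simp
    have s0: "s \<noteq> 0" unfolding s_def using npos by simp
    have cs: "cnj s = s" unfolding s_def by simp
    have "mmul N n (Zop n k) (adj (Zop n k)) i m = (\<Sum>l\<in>basis N n. Zop n k i l * cnj (Zop n k m l))"
      unfolding mmul_def adj_def ..
    also have "\<dots> = (\<Sum>a<n k. Zop n k i (Bs k a) * cnj (Zop n k m (Bs k a)))"
      using k by (intro sum_level) (auto simp: Zop_col)
    also have "\<dots> = (\<Sum>a<n k. (zeta n k ^ (b * a) * cnj (zeta n k ^ (b' * a))) / (s * s))"
      using bb n_mono by (intro sum.cong) (auto simp: Zop_Bs s_def[symmetric] cs)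
    also have "\<dots> = (\<Sum>a<n k. zeta n k ^ (b * a) * cnj (zeta n k ^ (b' * a))) / (s * s)"
      by (simp add: sum_divide_distrib)
    also have "\<dots> = (if b = b' then 1 else 0)"
      unfolding zeta_def using zeta_sum[of "n k" b b'] bb npos n_mono ss s0 by auto
    also have "\<dots> = proj n (Suc k) i m" using bb by (auto simp: proj_def)
    finally show ?thesis .
  next
    case False
    have "mmul N n (Zop n k) (adj (Zop n k)) i m = (\<Sum>l\<in>basis N n. Zop n k i l * cnj (Zop n k m l))"
      unfolding mmul_def adj_def ..
    also have "\<dots> = 0"
    proof (intro sum.neutral ballI)
      fix l
      show "Zop n k i l * cnj (Zop n k m l) = 0"
      proof (rule ccontr)
        assume "Zop n k i l * cnj (Zop n k m l) \<noteq> 0"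
        then have "Zop n k i l \<noteq> 0" "Zop n k m l \<noteq> 0" by auto
        then obtain b a b2 a2 where "i = Bs (Suc k) b" "l = Bs k a" "b < n (Suc k)"
          "m = Bs (Suc k) b2" "l = Bs k a2" "b2 < n (Suc k)" by (metis Zop_nz)
        then show False using False by blast
      qed
    qed
    also have "\<dots> = proj n (Suc k) i m" using False by (auto simp: proj_def)
    finally show ?thesis .
  qed
qed

lemma absZ_def': "absZ N n k = mmul N n (adj (Zop n k)) (Zop n k)" by (simp add: absZ_def)

lemma absZ_N: "absZ N n N = 0"
  unfolding absZ_def mmul_def adj_def
proof (intro op_eqI)
  fix i m
  have "Zop n N l m = 0" if "l \<in> basis N n" for l
  proof (rule ccontr)
    assume "Zop n N l m \<noteq> 0"
    then obtain b a where "l = Bs (Suc N) b" using Zop_nz by blast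
    with that show False by (auto simp: basis_def)
  qed
  then show "(\<Sum>l\<in>basis N n. cnj (Zop n N l i) * Zop n N l m) = 0 i m" by simp
qed

lemma PP: assumes "1 \<le> j" "j \<le> N" "1 \<le> l" "l \<le> N"
  shows "mmul N n (proj n j) (proj n l) = (if j = l then proj n j else 0)"
  unfolding proj_left[OF assms(1,2)] by (intro op_eqI) (auto simp: proj_def inlev_def)

lemma PZ: assumes "1 \<le> j" "j \<le> N"
  shows "mmul N n (proj n j) (Zop n k) = (if j = Suc k then Zop n k else 0)"
  unfolding proj_left[OF assms(1,2)]
proof (intro op_eqI)
  fix i m
  show "(if inlev n j i then Zop n k i m else 0) = (if j = Suc k then Zop n k else 0) i m"
  proof (cases "Zop n k i m = 0")
    case False
    then obtain b a where "i = Bs (Suc k) b" "b < n (Suc k)" using Zop_nz by blast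
    then show ?thesis by (auto simp: inlev_def)
  qed auto
qed

lemma ZP: assumes "1 \<le> j" "j \<le> N"
  shows "mmul N n (Zop n k) (proj n j) = (if j = k then Zop n k else 0)"
  unfolding proj_right[OF assms(1,2)]
proof (intro op_eqI)
  fix i m
  show "(if inlev n j m then Zop n k i m else 0) = (if j = k then Zop n k else 0) i m"
  proof (cases "Zop n k i m = 0")
    case False
    then obtain b a where "m = Bs k a" "a < n k" using Zop_nz by blast
    then show ?thesis by (auto simp: inlev_def)
  qed auto
qed

lemma PZs: assumes "1 \<le> j" "j \<le> N"
  shows "mmul N n (proj n j) (adj (Zop n k)) = (if j = k then adj (Zop n k) else 0)"
proof -
  have "mmul N n (proj n j) (adj (Zop n k)) = adj (mmul N n (Zop n k) (proj n j))"
    by (simp add: adj_mmul adj_proj)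
  then show ?thesis by (simp add: ZP[OF assms] adj_def zero_fun_def)
qed

lemma ZsP: assumes "1 \<le> j" "j \<le> N"
  shows "mmul N n (adj (Zop n k)) (proj n j) = (if j = Suc k then adj (Zop n k) else 0)"
proof -
  have "mmul N n (adj (Zop n k)) (proj n j) = adj (mmul N n (proj n j) (Zop n k))"
    by (simp add: adj_mmul adj_proj)
  then show ?thesis by (simp add: PZ[OF assms] adj_def zero_fun_def)
qed

lemma quad_form:
  assumes ij: "i \<in> basis N n" "j \<in> basis N n" "i \<noteq> j"
  shows "inner N n (\<lambda>x. (if x = i then 1 else 0) + (if x = j then c else 0))
           (app N n A (\<lambda>x. (if x = i then 1 else 0) + (if x = j then c else 0)))
         = A i i + A i j * c + cnj c * (A j i + A j j * c)"
proof -
  let ?v = "\<lambda>x. (if x = i then 1 else 0) + (if x = j then c else 0)"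
  have inn: "(\<Sum>y\<in>basis N n. A x y * ?v y) = A x i + A x j * c" for x
  proof -
    have "(\<Sum>y\<in>basis N n. A x y * ?v y) = (\<Sum>y\<in>basis N n. (if y = i then A x i else 0) + (if y = j then A x j * c else 0))"
      by (intro sum.cong) (use ij in auto)
    also have "\<dots> = A x i + A x j * c" using ij by (simp add: sum.distrib finite_basis)
    finally show ?thesis .
  qed
  have "inner N n ?v (app N n A ?v) = (\<Sum>x\<in>basis N n. cnj (?v x) * (A x i + A x j * c))"
    unfolding inner_def app_def inn ..
  also have "\<dots> = (\<Sum>x\<in>basis N n. (if x = i then A i i + A i j * c else 0) + (if x = j then cnj c * (A j i + A j j * c) else 0))"
    by (intro sum.cong) (use ij in auto)
  also have "\<dots> = A i i + A i j * c + cnj c * (A j i + A j j * c)" using ij by (simp add: sum.distrib finite_basis)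
  finally show ?thesis .
qed

lemma single_form: "i \<in> basis N n \<Longrightarrow> inner N n (ket i) (app N n A (ket i)) = A i i"
proof -
  assume i: "i \<in> basis N n"
  have "(\<Sum>y\<in>basis N n. A x y * ket i y) = A x i" for x
  proof -
    have "(\<Sum>y\<in>basis N n. A x y * ket i y) = (\<Sum>y\<in>basis N n. if y = i then A x i else 0)"
      by (intro sum.cong) (auto simp: ket_def)
    then show ?thesis using i by (simp add: finite_basis)
  qed
  then have "inner N n (ket i) (app N n A (ket i)) = (\<Sum>x\<in>basis N n. cnj (ket i x) * A x i)"
    unfolding inner_def app_def by simp
  also have "\<dots> = (\<Sum>x\<in>basis N n. if x = i then A i i else 0)" by (intro sum.cong) (auto simp: ket_def)
  finally show ?thesis using i by (simp add: finite_basis)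
qed

lemma ket_vec: "i \<in> basis N n \<Longrightarrow> is_vec N n (ket i)"
  unfolding is_vec_def ket_def by auto

lemma state_herm: assumes st: "is_state N n \<rho>" shows "adj \<rho> = \<rho>"
proof (intro op_eqI)
  fix i j
  have isop: "is_op N n \<rho>" and pos: "\<And>v. is_vec N n v \<Longrightarrow> Im (inner N n v (app N n \<rho> v)) = 0"
    using st unfolding is_state_def by auto
  have diag: "Im (\<rho> x x) = 0" if "x \<in> basis N n" for x
    using pos[OF ket_vec[OF that]] single_form[OF that] by simp
  have "\<rho> i j = cnj (\<rho> j i)"
  proof (cases "i \<in> basis N n \<and> j \<in> basis N n")
    case False
    then show ?thesis using isop unfolding is_op_def by auto
  next
    case True
    show ?thesis
    proof (cases "i = j")
      case True': True
      then show ?thesis using diag True by (simp add: complex_eq_iff)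
    next
      case False
      let ?v = "\<lambda>c x. (if x = j then 1 else 0) + (if x = i then c else 0)"
      have vv: "is_vec N n (?v c)" for c using True unfolding is_vec_def by auto
      have q1: "Im (\<rho> j j + \<rho> j i * 1 + cnj 1 * (\<rho> i j + \<rho> i i * 1)) = 0"
        using pos[OF vv[of 1]] quad_form[of j N n i 1 \<rho>] True False by simp
      have q2: "Im (\<rho> j j + \<rho> j i * \<i> + cnj \<i> * (\<rho> i j + \<rho> i i * \<i>)) = 0"
        using pos[OF vv[of \<i>]] quad_form[of j N n i \<i> \<rho>] True False by simp
      have "Im (\<rho> j i) + Im (\<rho> i j) = 0" using q1 diag True by simp
      moreover have "Re (\<rho> j i) - Re (\<rho> i j) = 0" using q2 diag True by simp
      ultimately show ?thesis by (simp add: complex_eq_iff)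
    qed
  qed
  then show "adj \<rho> i j = \<rho> i j" unfolding adj_def by simp
qed

lemma supp_left:
  assumes supp: "supported_Omega N n \<rho>" and isop: "is_op N n \<rho>"
    and u: "u \<in> {ket Mi, ket Pl, phi n 1 0, phi n N 0}"
  shows "(\<Sum>l\<in>basis N n. cnj (u l) * \<rho> l m) = 0"
proof (cases "m \<in> basis N n")
  case True
  have "app N n \<rho> (ket m) = (\<lambda>i. \<rho> i m)"
  proof
    fix i
    have "(\<Sum>y\<in>basis N n. \<rho> i y * ket m y) = (\<Sum>y\<in>basis N n. if y = m then \<rho> i m else 0)"
      by (intro sum.cong) (auto simp: ket_def)
    then show "app N n \<rho> (ket m) i = \<rho> i m" unfolding app_def using True by (simp add: finite_basis)
  qed
  then show ?thesis using supp ket_vec[OF True] u unfolding supported_Omega_def inner_def by metis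
next
  case False
  then show ?thesis using isop unfolding is_op_def by simp
qed

lemma adj_outer: "adj (outer x u) = outer u x" unfolding adj_def outer_def by (intro op_eqI) simp

lemma kill_left: assumes "\<And>m. (\<Sum>l\<in>basis N n. cnj (u l) * \<rho> l m) = 0"
  shows "mmul N n (outer x u) \<rho> = 0"
proof (intro op_eqI)
  fix i m
  have "mmul N n (outer x u) \<rho> i m = x i * (\<Sum>l\<in>basis N n. cnj (u l) * \<rho> l m)"
    unfolding mmul_def outer_def by (simp add: sum_distrib_left mult.assoc)
  then show "mmul N n (outer x u) \<rho> i m = 0 i m" using assms by simp
qed

lemma kill_right: assumes "\<And>m. (\<Sum>l\<in>basis N n. cnj (u l) * \<rho> l m) = 0" and herm: "adj \<rho> = \<rho>"
  shows "mmul N n \<rho> (outer u x) = 0"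
proof (intro op_eqI)
  fix i m
  have r: "\<rho> i l = cnj (\<rho> l i)" for l using fun_cong[OF fun_cong[OF herm, of i], of l] unfolding adj_def by simp
  have a: "mmul N n \<rho> (outer u x) i m = (\<Sum>l\<in>basis N n. \<rho> i l * u l) * cnj (x m)"
    unfolding mmul_def outer_def by (simp add: sum_distrib_right mult.assoc)
  have b: "(\<Sum>l\<in>basis N n. \<rho> i l * u l) = cnj (\<Sum>l\<in>basis N n. cnj (u l) * \<rho> l i)"
    by (simp add: r mult.commute)
  have "mmul N n \<rho> (outer u x) i m = cnj (\<Sum>l\<in>basis N n. cnj (u l) * \<rho> l i) * cnj (x m)"
    unfolding a b ..
  then show "mmul N n \<rho> (outer u x) i m = 0 i m" using assms by simp
qed

lemma adj_absZ: "adj (absZ N n k) = absZ N n k"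
  by (simp add: absZ_def adj_mmul adj_adj)

context
  fixes N :: nat and n :: "nat \<Rightarrow> nat"
  assumes n_mono: "\<And>k. 1 \<le> k \<Longrightarrow> k < N \<Longrightarrow> n (Suc k) \<le> n k"
    and n_pos: "\<And>k. 1 \<le> k \<Longrightarrow> k \<le> N \<Longrightarrow> 1 \<le> n k"
begin

lemma ZZ: "1 \<le> k \<Longrightarrow> k < N \<Longrightarrow> mmul N n (Zop n k) (adj (Zop n k)) = proj n (Suc k)"
  using ZZs n_mono n_pos by auto

lemma PQ: assumes "1 \<le> j" "j \<le> N" "1 \<le> k" "k \<le> N"
  shows "mmul N n (proj n j) (absZ N n k) = (if j = k then absZ N n k else 0)"
proof (cases "k = N")
  case True then show ?thesis by (simp add: absZ_N mmul_zero_right)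
next
  case False
  then show ?thesis unfolding absZ_def using assms
    by (simp add: mmul_assoc[symmetric] PZs mmul_zero_left)
qed

lemma QP: assumes "1 \<le> j" "j \<le> N" "1 \<le> k" "k \<le> N"
  shows "mmul N n (absZ N n k) (proj n j) = (if j = k then absZ N n k else 0)"
proof (cases "k = N")
  case True then show ?thesis by (simp add: absZ_N mmul_zero_left)
next
  case False
  then show ?thesis unfolding absZ_def using assms
    by (simp add: mmul_assoc ZP mmul_zero_right)
qed

lemma QQ: assumes "1 \<le> k" "k \<le> N"
  shows "mmul N n (absZ N n k) (absZ N n k) = absZ N n k"
proof (cases "k = N")
  case True then show ?thesis by (simp add: absZ_N mmul_zero_left)
next
  case False
  then have "k < N" using assms by simp
  then show ?thesis unfolding absZ_def using assms
    by (simp add: mmul_assoc ZZ flip: mmul_assoc[of N n "Zop n k"]) (simp add: PZ)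
qed

lemma QQ2: assumes "1 \<le> j" "j \<le> N" "1 \<le> k" "k \<le> N" "j \<noteq> k"
  shows "mmul N n (absZ N n j) (absZ N n k) = 0"
proof -
  have "absZ N n j = mmul N n (absZ N n j) (proj n j)" using QP[of j j] assms by simp
  then have "mmul N n (absZ N n j) (absZ N n k) = mmul N n (absZ N n j) (mmul N n (proj n j) (absZ N n k))"
    by (metis mmul_assoc)
  also have "\<dots> = 0" using PQ assms by (simp add: mmul_zero_right)
  finally show ?thesis .
qed

lemma ZQ: assumes "1 \<le> k" "k < N"
  shows "mmul N n (Zop n k) (absZ N n k) = Zop n k"
  unfolding absZ_def using assms
  by (simp add: ZZ flip: mmul_assoc) (simp add: PZ)

lemma QZs: assumes "1 \<le> k" "k < N"
  shows "mmul N n (absZ N n k) (adj (Zop n k)) = adj (Zop n k)"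
  unfolding absZ_def using assms
  by (simp add: ZZ mmul_assoc) (simp add: ZsP)


definition Wop :: "(nat \<Rightarrow> complex) \<Rightarrow> (nat \<Rightarrow> complex) \<Rightarrow> op" where
  "Wop f g = (\<Sum>k\<in>{1..N-1}. scal (f k) (absZ N n k) + scal (g k) (proj n (Suc k)))"

definition qf :: "(nat \<Rightarrow> complex) \<Rightarrow> nat \<Rightarrow> complex" where
  "qf f j = (if j < N then f j else 0)"
definition qg :: "(nat \<Rightarrow> complex) \<Rightarrow> nat \<Rightarrow> complex" where
  "qg g j = (if 2 \<le> j then g (j - 1) else 0)"

lemma sum_delta_1: assumes "1 \<le> j" "j \<le> N"
  shows "(\<Sum>k\<in>{1..N-1}. (if k = j then X k else 0) + (if k = j - 1 then Y k else 0))
       = (if j < N then X j else 0) + (if 2 \<le> j then Y (j - 1) else (0::op))"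
proof -
  have e: "(j \<in> {1..N-1}) = (j < N)" "(j - 1 \<in> {1..N-1}) = (2 \<le> j)" using assms by auto
  show ?thesis by (simp only: sum.distrib sum.delta[OF finite_atLeastAtMost] e)
qed

lemma AW: assumes "1 \<le> j" "j \<le> N"
  shows "mmul N n (absZ N n j) (Wop f g) = scal (qf f j + qg g j) (absZ N n j)"
proof -
  have "mmul N n (absZ N n j) (Wop f g) =
     (\<Sum>k\<in>{1..N-1}. (if k = j then scal (f k) (absZ N n j) else 0) + (if k = j - 1 then scal (g k) (absZ N n j) else 0))"
    unfolding Wop_def mmul_sum_right
  proof (intro sum.cong refl)
    fix k assume k: "k \<in> {1..N-1}"
    have "Suc k = j \<longleftrightarrow> k = j - 1" using assms by auto
    then show "mmul N n (absZ N n j) (scal (f k) (absZ N n k) + scal (g k) (proj n (Suc k))) =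
      (if k = j then scal (f k) (absZ N n j) else 0) + (if k = j - 1 then scal (g k) (absZ N n j) else 0)"
      using k assms by (auto simp: mmul_add_right mmul_scal_right QQ QQ2 QP scal_zero)
  qed
  also have "\<dots> = scal (qf f j + qg g j) (absZ N n j)"
    unfolding sum_delta_1[OF assms] qf_def qg_def by (simp add: scal_addc scal_zero')
  finally show ?thesis .
qed

lemma WA: assumes "1 \<le> j" "j \<le> N"
  shows "mmul N n (Wop f g) (absZ N n j) = scal (qf f j + qg g j) (absZ N n j)"
proof -
  have "mmul N n (Wop f g) (absZ N n j) =
     (\<Sum>k\<in>{1..N-1}. (if k = j then scal (f k) (absZ N n j) else 0) + (if k = j - 1 then scal (g k) (absZ N n j) else 0))"
    unfolding Wop_def mmul_sum_left
  proof (intro sum.cong refl)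
    fix k assume k: "k \<in> {1..N-1}"
    have "Suc k = j \<longleftrightarrow> k = j - 1" using assms by auto
    then show "mmul N n (scal (f k) (absZ N n k) + scal (g k) (proj n (Suc k))) (absZ N n j) =
      (if k = j then scal (f k) (absZ N n j) else 0) + (if k = j - 1 then scal (g k) (absZ N n j) else 0)"
      using k assms by (auto simp: mmul_add_left mmul_scal_left QQ QQ2 PQ scal_zero)
  qed
  also have "\<dots> = scal (qf f j + qg g j) (absZ N n j)"
    unfolding sum_delta_1[OF assms] qf_def qg_def by (simp add: scal_addc scal_zero')
  finally show ?thesis .
qed

lemma PW: assumes "1 \<le> j" "j \<le> N"
  shows "mmul N n (proj n j) (Wop f g) = scal (qf f j) (absZ N n j) + scal (qg g j) (proj n j)"
proof -
  have "mmul N n (proj n j) (Wop f g) =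
     (\<Sum>k\<in>{1..N-1}. (if k = j then scal (f k) (absZ N n j) else 0) + (if k = j - 1 then scal (g k) (proj n j) else 0))"
    unfolding Wop_def mmul_sum_right
  proof (intro sum.cong refl)
    fix k assume k: "k \<in> {1..N-1}"
    have "j = Suc k \<longleftrightarrow> k = j - 1" using assms by auto
    then show "mmul N n (proj n j) (scal (f k) (absZ N n k) + scal (g k) (proj n (Suc k))) =
      (if k = j then scal (f k) (absZ N n j) else 0) + (if k = j - 1 then scal (g k) (proj n j) else 0)"
      using k assms by (auto simp: mmul_add_right mmul_scal_right PQ PP scal_zero)
  qed
  also have "\<dots> = scal (qf f j) (absZ N n j) + scal (qg g j) (proj n j)"
    unfolding sum_delta_1[OF assms] qf_def qg_def by (simp add: scal_zero')
  finally show ?thesis .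
qed

lemma WP: assumes "1 \<le> j" "j \<le> N"
  shows "mmul N n (Wop f g) (proj n j) = scal (qf f j) (absZ N n j) + scal (qg g j) (proj n j)"
proof -
  have "mmul N n (Wop f g) (proj n j) =
     (\<Sum>k\<in>{1..N-1}. (if k = j then scal (f k) (absZ N n j) else 0) + (if k = j - 1 then scal (g k) (proj n j) else 0))"
    unfolding Wop_def mmul_sum_left
  proof (intro sum.cong refl)
    fix k assume k: "k \<in> {1..N-1}"
    have "Suc k = j \<longleftrightarrow> k = j - 1" using assms by auto
    then show "mmul N n (scal (f k) (absZ N n k) + scal (g k) (proj n (Suc k))) (proj n j) =
      (if k = j then scal (f k) (absZ N n j) else 0) + (if k = j - 1 then scal (g k) (proj n j) else 0)"
      using k assms by (auto simp: mmul_add_left mmul_scal_left QP PP scal_zero)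
  qed
  also have "\<dots> = scal (qf f j) (absZ N n j) + scal (qg g j) (proj n j)"
    unfolding sum_delta_1[OF assms] qf_def qg_def by (simp add: scal_zero')
  finally show ?thesis .
qed


lemma BW: assumes "1 \<le> j" "j \<le> N"
  shows "mmul N n (proj n j - absZ N n j) (Wop f g) = scal (qg g j) (proj n j - absZ N n j)"
  using assms by (simp add: mmul_diff_left PW AW scal_addc scal_diff)

lemma WB: assumes "1 \<le> j" "j \<le> N"
  shows "mmul N n (Wop f g) (proj n j - absZ N n j) = scal (qg g j) (proj n j - absZ N n j)"
  using assms by (simp add: mmul_diff_right WP WA scal_addc scal_diff)

definition Phi :: "(nat \<Rightarrow> complex) \<Rightarrow> (nat \<Rightarrow> complex) \<Rightarrow> op \<Rightarrow> op" where
  "Phi cm cp \<rho> = (\<Sum>k\<in>{1..N-1}. scal (cm k) (mmul N n (mmul N n (Zop n k) \<rho>) (adj (Zop n k)))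
       + scal (cp k) (mmul N n (mmul N n (adj (Zop n k)) \<rho>) (Zop n k)))"

lemma PhiPP: assumes "1 \<le> j" "j \<le> N" "1 \<le> l" "l \<le> N"
  shows "mmul N n (proj n j) (mmul N n (Phi cm cp \<rho>) (proj n l)) =
    (if j = l then (if j < N then scal (cp j) (mmul N n (mmul N n (adj (Zop n j)) \<rho>) (Zop n j)) else 0)
       + (if 2 \<le> j then scal (cm (j - 1)) (mmul N n (mmul N n (Zop n (j - 1)) \<rho>) (adj (Zop n (j - 1)))) else 0)
     else 0)"
proof -
  have sm: "mmul N n (proj n j) (mmul N n (scal c (mmul N n (mmul N n (Zop n k) \<rho>) (adj (Zop n k)))) (proj n l))
     = (if j = Suc k \<and> l = Suc k then scal c (mmul N n (mmul N n (Zop n k) \<rho>) (adj (Zop n k))) else 0)" for c k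
  proof -
    have "mmul N n (proj n j) (mmul N n (scal c (mmul N n (mmul N n (Zop n k) \<rho>) (adj (Zop n k)))) (proj n l))
      = scal c (mmul N n (mmul N n (proj n j) (Zop n k)) (mmul N n \<rho> (mmul N n (adj (Zop n k)) (proj n l))))"
      by (simp add: mmul_scal_left mmul_scal_right mmul_assoc)
    then show ?thesis using assms by (simp add: PZ ZsP mmul_zero_left mmul_zero_right scal_zero mmul_assoc)
  qed
  have sp: "mmul N n (proj n j) (mmul N n (scal c (mmul N n (mmul N n (adj (Zop n k)) \<rho>) (Zop n k))) (proj n l))
     = (if j = k \<and> l = k then scal c (mmul N n (mmul N n (adj (Zop n k)) \<rho>) (Zop n k)) else 0)" for c k
  proof -
    have "mmul N n (proj n j) (mmul N n (scal c (mmul N n (mmul N n (adj (Zop n k)) \<rho>) (Zop n k))) (proj n l))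
      = scal c (mmul N n (mmul N n (proj n j) (adj (Zop n k))) (mmul N n \<rho> (mmul N n (Zop n k) (proj n l))))"
      by (simp add: mmul_scal_left mmul_scal_right mmul_assoc)
    then show ?thesis using assms by (simp add: PZs ZP mmul_zero_left mmul_zero_right scal_zero mmul_assoc)
  qed
  show ?thesis
  proof (cases "j = l")
    case True
    have "mmul N n (proj n j) (mmul N n (Phi cm cp \<rho>) (proj n l)) =
      (\<Sum>k\<in>{1..N-1}. (if k = j then scal (cp k) (mmul N n (mmul N n (adj (Zop n k)) \<rho>) (Zop n k)) else 0)
          + (if k = j - 1 then scal (cm k) (mmul N n (mmul N n (Zop n k) \<rho>) (adj (Zop n k))) else 0))"
      unfolding Phi_def mmul_sum_left mmul_sum_right
    proof (intro sum.cong refl)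
      fix k assume k: "k \<in> {1..N-1}"
      have "j = Suc k \<longleftrightarrow> k = j - 1" using assms by auto
      then show "mmul N n (proj n j) (mmul N n (scal (cm k) (mmul N n (mmul N n (Zop n k) \<rho>) (adj (Zop n k)))
           + scal (cp k) (mmul N n (mmul N n (adj (Zop n k)) \<rho>) (Zop n k))) (proj n l)) =
         (if k = j then scal (cp k) (mmul N n (mmul N n (adj (Zop n k)) \<rho>) (Zop n k)) else 0)
          + (if k = j - 1 then scal (cm k) (mmul N n (mmul N n (Zop n k) \<rho>) (adj (Zop n k))) else 0)"
        unfolding mmul_add_left mmul_add_right sm sp using True by auto
    qed
    also have "\<dots> = (if j < N then scal (cp j) (mmul N n (mmul N n (adj (Zop n j)) \<rho>) (Zop n j)) else 0)
       + (if 2 \<le> j then scal (cm (j - 1)) (mmul N n (mmul N n (Zop n (j - 1)) \<rho>) (adj (Zop n (j - 1)))) else 0)"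
      by (rule sum_delta_1[OF assms(1,2)])
    finally show ?thesis using True by simp
  next
    case False
    have "mmul N n (proj n j) (mmul N n (Phi cm cp \<rho>) (proj n l)) = 0"
      unfolding Phi_def mmul_sum_left mmul_sum_right
      by (intro sum.neutral ballI) (use False in \<open>auto simp: mmul_add_left mmul_add_right sm sp\<close>)
    then show ?thesis using False by simp
  qed
qed


definition Xop :: "op \<Rightarrow> op \<Rightarrow> op \<Rightarrow> op \<Rightarrow> op" where
  "Xop H D Ph \<rho> = scal (- \<i>) (mmul N n H \<rho> - mmul N n \<rho> H) - scal (1/2) (mmul N n D \<rho> + mmul N n \<rho> D) + Ph"

lemma sandwich:
  assumes "mmul N n S H = scal hs S" "mmul N n H T = scal ht T" "mmul N n S D = scal ds S" "mmul N n D T = scal dt T"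
  shows "mmul N n S (mmul N n (Xop H D Ph \<rho>) T) = scal (- \<i> * (hs - ht) - (ds + dt) / 2) (mmul N n S (mmul N n \<rho> T)) + mmul N n S (mmul N n Ph T)"
proof -
  let ?Y = "mmul N n S (mmul N n \<rho> T)"
  have 1: "mmul N n S (mmul N n (mmul N n H \<rho>) T) = scal hs ?Y"
    by (simp add: mmul_assoc flip: mmul_assoc[of N n S H] add: assms mmul_scal_left)
  have 2: "mmul N n S (mmul N n (mmul N n \<rho> H) T) = scal ht ?Y"
    by (simp add: mmul_assoc assms mmul_scal_right)
  have 3: "mmul N n S (mmul N n (mmul N n D \<rho>) T) = scal ds ?Y"
    by (simp add: mmul_assoc flip: mmul_assoc[of N n S D] add: assms mmul_scal_left)
  have 4: "mmul N n S (mmul N n (mmul N n \<rho> D) T) = scal dt ?Y"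
    by (simp add: mmul_assoc assms mmul_scal_right)
  have "mmul N n S (mmul N n (Xop H D Ph \<rho>) T) = scal (- \<i>) (scal hs ?Y - scal ht ?Y) - scal (1/2) (scal ds ?Y + scal dt ?Y) + mmul N n S (mmul N n Ph T)"
    unfolding Xop_def
    by (simp only: mmul_add_left mmul_add_right mmul_diff_left mmul_diff_right mmul_scal_left mmul_scal_right 1 2 3 4)
  also have "\<dots> = scal (- \<i> * (hs - ht) - (ds + dt) / 2) ?Y + mmul N n S (mmul N n Ph T)"
    unfolding scal_def by (intro op_eqI) (simp add: algebra_simps)
  finally show ?thesis .
qed

definition qfr :: "(nat \<Rightarrow> real) \<Rightarrow> nat \<Rightarrow> real" where
  "qfr c j = (if j < N then c j else 0)"
definition qgr :: "(nat \<Rightarrow> real) \<Rightarrow> nat \<Rightarrow> real" where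
  "qgr c j = (if 2 \<le> j then c (j - 1) else 0)"

lemma qf_real: "qf (\<lambda>k. complex_of_real (c k)) j = complex_of_real (qfr c j)"
  by (simp add: qf_def qfr_def)
lemma qg_real: "qg (\<lambda>k. complex_of_real (c k)) j = complex_of_real (qgr c j)"
  by (simp add: qg_def qgr_def)
lemma qg_neg: "qg (\<lambda>k. - complex_of_real (c k)) j = - complex_of_real (qgr c j)"
  by (simp add: qg_def qgr_def)

lemma AP: "1 \<le> j \<Longrightarrow> j \<le> N \<Longrightarrow> mmul N n (absZ N n j) (proj n j) = absZ N n j"
  using QP by simp
lemma PA: "1 \<le> j \<Longrightarrow> j \<le> N \<Longrightarrow> mmul N n (proj n j) (absZ N n j) = absZ N n j"
  using PQ by simp
lemma BP: "1 \<le> j \<Longrightarrow> j \<le> N \<Longrightarrow> mmul N n (proj n j - absZ N n j) (proj n j) = proj n j - absZ N n j"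
  using QP PP by (simp add: mmul_diff_left)
lemma PB: "1 \<le> j \<Longrightarrow> j \<le> N \<Longrightarrow> mmul N n (proj n j) (proj n j - absZ N n j) = proj n j - absZ N n j"
  using PQ PP by (simp add: mmul_diff_right)


lemma coef_nz: "0 < ds + dt \<Longrightarrow> - \<i> * (complex_of_real hs - complex_of_real ht) - (complex_of_real ds + complex_of_real dt) / 2 \<noteq> 0"
proof
  define c where "c = - \<i> * (complex_of_real hs - complex_of_real ht) - (complex_of_real ds + complex_of_real dt) / 2"
  assume a: "0 < ds + dt" "- \<i> * (complex_of_real hs - complex_of_real ht) - (complex_of_real ds + complex_of_real dt) / 2 = 0"
  have r: "Re c = - (ds + dt) / 2" unfolding c_def by (simp add: field_simps)
  have "c = 0" using a(2) unfolding c_def .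
  then have "Re c = 0" by simp
  then show False using r a(1) by simp
qed

lemma Phi_sand: "mmul N n S (proj n j) = S \<Longrightarrow> mmul N n (proj n l) T = T \<Longrightarrow>
   mmul N n S (mmul N n Ph T) = mmul N n S (mmul N n (mmul N n (proj n j) (mmul N n Ph (proj n l))) T)"
  by (metis mmul_assoc)

context
  fixes \<rho> :: op and hm hp cm cp :: "nat \<Rightarrow> real"
  assumes N2: "2 \<le> N"
    and cpos: "\<And>k. 1 \<le> k \<Longrightarrow> k < N \<Longrightarrow> 0 < cm k \<and> 0 < cp k"
    and X0: "Xop (Wop (\<lambda>k. of_real (hm k)) (\<lambda>k. - of_real (hp k))) (Wop (\<lambda>k. of_real (cm k)) (\<lambda>k. of_real (cp k)))
              (Phi (\<lambda>k. of_real (cm k)) (\<lambda>k. of_real (cp k)) \<rho>) \<rho> = 0"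
begin

abbreviation "HH \<equiv> Wop (\<lambda>k. of_real (hm k)) (\<lambda>k. - of_real (hp k))"
abbreviation "DD \<equiv> Wop (\<lambda>k. of_real (cm k)) (\<lambda>k. of_real (cp k))"
abbreviation "PH \<equiv> Phi (\<lambda>k. of_real (cm k)) (\<lambda>k. of_real (cp k)) \<rho>"
abbreviation "AA j \<equiv> absZ N n j"
abbreviation "BB j \<equiv> proj n j - absZ N n j"

lemma core:
  assumes "mmul N n S HH = scal (of_real hs) S" "mmul N n HH T = scal (of_real ht) T"
    "mmul N n S DD = scal (of_real ds) S" "mmul N n DD T = scal (of_real dt) T"
  shows "scal (- \<i> * (complex_of_real hs - complex_of_real ht) - (complex_of_real ds + complex_of_real dt) / 2) (mmul N n S (mmul N n \<rho> T))
     + mmul N n S (mmul N n PH T) = 0"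
  using sandwich[OF assms, of PH \<rho>] X0 by (simp add: mmul_zero_left mmul_zero_right)

lemma AH: "1 \<le> j \<Longrightarrow> j \<le> N \<Longrightarrow> mmul N n (AA j) HH = scal (of_real (qfr hm j - qgr hp j)) (AA j)"
  by (simp add: AW qf_real qg_neg)
lemma HA: "1 \<le> j \<Longrightarrow> j \<le> N \<Longrightarrow> mmul N n HH (AA j) = scal (of_real (qfr hm j - qgr hp j)) (AA j)"
  by (simp add: WA qf_real qg_neg)
lemma AD: "1 \<le> j \<Longrightarrow> j \<le> N \<Longrightarrow> mmul N n (AA j) DD = scal (of_real (qfr cm j + qgr cp j)) (AA j)"
  by (simp add: AW qf_real qg_real)
lemma DA: "1 \<le> j \<Longrightarrow> j \<le> N \<Longrightarrow> mmul N n DD (AA j) = scal (of_real (qfr cm j + qgr cp j)) (AA j)"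
  by (simp add: WA qf_real qg_real)
lemma BH: "1 \<le> j \<Longrightarrow> j \<le> N \<Longrightarrow> mmul N n (BB j) HH = scal (of_real (- qgr hp j)) (BB j)"
  by (simp add: BW qg_neg)
lemma HB: "1 \<le> j \<Longrightarrow> j \<le> N \<Longrightarrow> mmul N n HH (BB j) = scal (of_real (- qgr hp j)) (BB j)"
  by (simp add: WB qg_neg)
lemma BD: "1 \<le> j \<Longrightarrow> j \<le> N \<Longrightarrow> mmul N n (BB j) DD = scal (of_real (qgr cp j)) (BB j)"
  by (simp add: BW qg_real)
lemma DB: "1 \<le> j \<Longrightarrow> j \<le> N \<Longrightarrow> mmul N n DD (BB j) = scal (of_real (qgr cp j)) (BB j)"
  by (simp add: WB qg_real)

lemma dB_pos: "2 \<le> j \<Longrightarrow> j \<le> N \<Longrightarrow> 0 < qgr cp j"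
proof -
  assume "2 \<le> j" "j \<le> N"
  then have "1 \<le> j - 1" "j - 1 < N" by auto
  then show ?thesis using cpos[of "j - 1"] \<open>2 \<le> j\<close> unfolding qgr_def by auto
qed
lemma dB_nn: "j \<le> N \<Longrightarrow> 0 \<le> qgr cp j"
  using dB_pos[of j] unfolding qgr_def by (cases "2 \<le> j") auto
lemma dA_pos: "1 \<le> j \<Longrightarrow> j \<le> N \<Longrightarrow> 0 < qfr cm j + qgr cp j"
proof -
  assume j: "1 \<le> j" "j \<le> N"
  show ?thesis
  proof (cases "j < N")
    case True
    then show ?thesis using cpos[of j] j dB_nn[OF j(2)] unfolding qfr_def by auto
  next
    case False
    then show ?thesis using dB_pos[of j] j N2 unfolding qfr_def by auto
  qed
qed

lemma offdiag: assumes j: "1 \<le> j" "j \<le> N" and l: "1 \<le> l" "l \<le> N" and jl: "j \<noteq> l"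
  shows "mmul N n (proj n j) (mmul N n \<rho> (proj n l)) = 0"
proof -
  have ph: "mmul N n S (mmul N n PH T) = 0" if "mmul N n S (proj n j) = S" "mmul N n (proj n l) T = T" for S T
    using Phi_sand[OF that, of PH] PhiPP[OF j l] jl by (simp add: mmul_zero_left mmul_zero_right)
  have jl2: "2 \<le> j \<or> 2 \<le> l" using j l jl by auto
  have AA: "mmul N n (AA j) (mmul N n \<rho> (AA l)) = 0"
    using core[OF AH[OF j] HA[OF l] AD[OF j] DA[OF l]] ph[OF AP[OF j] PA[OF l]]
      coef_nz dA_pos[OF j] dA_pos[OF l] by (metis add_0_right add_pos_pos scal_eq0)
  have AB: "mmul N n (AA j) (mmul N n \<rho> (BB l)) = 0"
    using core[OF AH[OF j] HB[OF l] AD[OF j] DB[OF l]] ph[OF AP[OF j] PB[OF l]]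
      coef_nz dA_pos[OF j] dB_nn[OF l(2)] by (metis add_0_right add_pos_nonneg scal_eq0)
  have BA: "mmul N n (BB j) (mmul N n \<rho> (AA l)) = 0"
    using core[OF BH[OF j] HA[OF l] BD[OF j] DA[OF l]] ph[OF BP[OF j] PA[OF l]]
      coef_nz dA_pos[OF l] dB_nn[OF j(2)] by (metis add_0_right add_nonneg_pos scal_eq0)
  have "0 < qgr cp j + qgr cp l" using jl2 dB_pos dB_nn[OF j(2)] dB_nn[OF l(2)] j l by (meson add_nonneg_pos add_pos_nonneg)
  then have BB: "mmul N n (BB j) (mmul N n \<rho> (BB l)) = 0"
    using core[OF BH[OF j] HB[OF l] BD[OF j] DB[OF l]] ph[OF BP[OF j] PB[OF l]]
      coef_nz by (metis add_0_right scal_eq0)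
  have "proj n j = AA j + BB j" "proj n l = AA l + BB l" by simp_all
  then have "mmul N n (proj n j) (mmul N n \<rho> (proj n l)) = mmul N n (AA j + BB j) (mmul N n \<rho> (AA l + BB l))" by simp
  also have "\<dots> = 0" by (simp only: mmul_add_left mmul_add_right AA AB BA BB) simp
  finally show ?thesis .
qed

lemma lin_helper: assumes "scal c1 Y + (scal c2 W + scal c3 Y) = 0" "c1 + c3 = - c4"
  shows "scal c4 Y = scal c2 W"
proof (intro op_eqI)
  fix i j
  have "c1 * Y i j + (c2 * W i j + c3 * Y i j) = 0"
    using fun_cong[OF fun_cong[OF assms(1), of i], of j] by (simp add: scal_def)
  then have "c4 * Y i j = c2 * W i j" using assms(2)
    by (metis (no_types, lifting) add.commute add.left_commute add_eq_0_iff distrib_right mult_minus_left)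
  then show "scal c4 Y i j = scal c2 W i j" by (simp add: scal_def)
qed

lemma prevterm: assumes j: "1 \<le> j" "j \<le> N"
  and IH: "2 \<le> j \<longrightarrow> scal (of_real (cm (j - 1))) (mmul N n (AA (j - 1)) (mmul N n \<rho> (AA (j - 1))))
           = scal (of_real (cp (j - 1))) (mmul N n (mmul N n (adj (Zop n (j - 1))) \<rho>) (Zop n (j - 1)))"
  shows "(if 2 \<le> j then scal (of_real (cm (j - 1))) (mmul N n (mmul N n (Zop n (j - 1)) \<rho>) (adj (Zop n (j - 1)))) else 0)
     = scal (of_real (qgr cp j)) (mmul N n (proj n j) (mmul N n \<rho> (proj n j)))"
proof (cases "2 \<le> j")
  case False then show ?thesis by (simp add: qgr_def scal_zero')
next
  case True
  define k where "k = j - 1"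
  have k: "1 \<le> k" "k < N" "Suc k = j" using True j unfolding k_def by auto
  let ?Z = "Zop n k" and ?Zs = "adj (Zop n k)"
  have "mmul N n (mmul N n ?Z \<rho>) ?Zs = mmul N n (mmul N n (mmul N n ?Z (AA k)) \<rho>) (mmul N n (AA k) ?Zs)"
    by (simp only: ZQ[OF k(1,2)] QZs[OF k(1,2)])
  also have "\<dots> = mmul N n ?Z (mmul N n (mmul N n (AA k) (mmul N n \<rho> (AA k))) ?Zs)"
    by (simp add: mmul_assoc)
  finally have e1: "scal (of_real (cm k)) (mmul N n (mmul N n ?Z \<rho>) ?Zs)
      = mmul N n ?Z (mmul N n (scal (of_real (cm k)) (mmul N n (AA k) (mmul N n \<rho> (AA k)))) ?Zs)"
    by (simp add: mmul_scal_left mmul_scal_right)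
  also have "\<dots> = mmul N n ?Z (mmul N n (scal (of_real (cp k)) (mmul N n (mmul N n ?Zs \<rho>) ?Z)) ?Zs)"
    using IH True unfolding k_def by simp
  also have "\<dots> = scal (of_real (cp k)) (mmul N n (mmul N n ?Z ?Zs) (mmul N n \<rho> (mmul N n ?Z ?Zs)))"
    by (simp add: mmul_scal_left mmul_scal_right mmul_assoc)
  also have "\<dots> = scal (of_real (cp k)) (mmul N n (proj n j) (mmul N n \<rho> (proj n j)))"
    using k by (simp add: ZZ)
  finally show ?thesis using True k unfolding qgr_def k_def by (simp add: scal_zero')
qed

lemma ZB: "1 \<le> j \<Longrightarrow> j < N \<Longrightarrow> mmul N n (Zop n j) (BB j) = 0"
  by (simp add: mmul_diff_right ZP ZQ)

lemma PhiAA: assumes j: "1 \<le> j" "j < N"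
  and IH: "2 \<le> j \<longrightarrow> scal (of_real (cm (j - 1))) (mmul N n (AA (j - 1)) (mmul N n \<rho> (AA (j - 1))))
           = scal (of_real (cp (j - 1))) (mmul N n (mmul N n (adj (Zop n (j - 1))) \<rho>) (Zop n (j - 1)))"
  shows "mmul N n (proj n j) (mmul N n PH (proj n j)) =
      scal (of_real (cp j)) (mmul N n (mmul N n (adj (Zop n j)) \<rho>) (Zop n j))
      + scal (of_real (qgr cp j)) (mmul N n (proj n j) (mmul N n \<rho> (proj n j)))"
  using PhiPP[of j j] prevterm[OF _ _ IH] j by (simp add: scal_zero')

lemma diag_step: assumes j: "1 \<le> j" "j < N"
  and IH: "2 \<le> j \<longrightarrow> scal (of_real (cm (j - 1))) (mmul N n (AA (j - 1)) (mmul N n \<rho> (AA (j - 1))))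
           = scal (of_real (cp (j - 1))) (mmul N n (mmul N n (adj (Zop n (j - 1))) \<rho>) (Zop n (j - 1)))"
  shows "scal (of_real (cm j)) (mmul N n (AA j) (mmul N n \<rho> (AA j)))
           = scal (of_real (cp j)) (mmul N n (mmul N n (adj (Zop n j)) \<rho>) (Zop n j))"
proof -
  have j': "1 \<le> j" "j \<le> N" using j by auto
  let ?Y = "mmul N n (AA j) (mmul N n \<rho> (AA j))"
  let ?W = "mmul N n (mmul N n (adj (Zop n j)) \<rho>) (Zop n j)"
  have "mmul N n (AA j) (mmul N n PH (AA j)) = mmul N n (AA j) (mmul N n (mmul N n (proj n j) (mmul N n PH (proj n j))) (AA j))"
    by (rule Phi_sand[OF AP[OF j'] PA[OF j']])
  also have "\<dots> = scal (of_real (cp j)) (mmul N n (mmul N n (AA j) (adj (Zop n j))) (mmul N n \<rho> (mmul N n (Zop n j) (AA j))))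
      + scal (of_real (qgr cp j)) (mmul N n (mmul N n (AA j) (proj n j)) (mmul N n \<rho> (mmul N n (proj n j) (AA j))))"
    by (subst PhiAA[OF j IH]) (simp add: mmul_add_left mmul_add_right mmul_scal_left mmul_scal_right mmul_assoc)
  also have "\<dots> = scal (of_real (cp j)) ?W + scal (of_real (qgr cp j)) ?Y"
    using j by (simp add: QZs ZQ AP PA mmul_assoc)
  finally have ph: "mmul N n (AA j) (mmul N n PH (AA j)) = scal (of_real (cp j)) ?W + scal (of_real (qgr cp j)) ?Y" .
  have c: "- \<i> * (complex_of_real (qfr hm j - qgr hp j) - complex_of_real (qfr hm j - qgr hp j)) -
      (complex_of_real (qfr cm j + qgr cp j) + complex_of_real (qfr cm j + qgr cp j)) / 2 + of_real (qgr cp j) = - of_real (cm j)"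
    using j by (simp add: qfr_def field_simps)
  show ?thesis
    by (rule lin_helper[OF _ c]) (use core[OF AH[OF j'] HA[OF j'] AD[OF j'] DA[OF j']] ph in simp)
qed

lemma diag: "1 \<le> j \<Longrightarrow> j < N \<Longrightarrow> scal (of_real (cm j)) (mmul N n (AA j) (mmul N n \<rho> (AA j)))
           = scal (of_real (cp j)) (mmul N n (mmul N n (adj (Zop n j)) \<rho>) (Zop n j))"
proof (induction j)
  case 0 then show ?case by simp
next
  case (Suc j)
  show ?case
  proof (rule diag_step[OF Suc.prems], intro impI)
    assume "2 \<le> Suc j"
    then show "scal (of_real (cm (Suc j - 1))) (mmul N n (AA (Suc j - 1)) (mmul N n \<rho> (AA (Suc j - 1))))
           = scal (of_real (cp (Suc j - 1))) (mmul N n (mmul N n (adj (Zop n (Suc j - 1))) \<rho>) (Zop n (Suc j - 1)))"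
      using Suc by simp
  qed
qed

lemma AB0: assumes j: "1 \<le> j" "j < N"
  shows "mmul N n (AA j) (mmul N n \<rho> (BB j)) = 0"
proof -
  have j': "1 \<le> j" "j \<le> N" using j by auto
  have IH: "2 \<le> j \<longrightarrow> scal (of_real (cm (j - 1))) (mmul N n (AA (j - 1)) (mmul N n \<rho> (AA (j - 1))))
           = scal (of_real (cp (j - 1))) (mmul N n (mmul N n (adj (Zop n (j - 1))) \<rho>) (Zop n (j - 1)))"
    using diag[of "j - 1"] j by simp
  let ?Y = "mmul N n (AA j) (mmul N n \<rho> (BB j))"
  have "mmul N n (AA j) (mmul N n PH (BB j)) = mmul N n (AA j) (mmul N n (mmul N n (proj n j) (mmul N n PH (proj n j))) (BB j))"
    by (rule Phi_sand[OF AP[OF j'] PB[OF j']])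
  also have "\<dots> = scal (of_real (cp j)) (mmul N n (mmul N n (AA j) (adj (Zop n j))) (mmul N n \<rho> (mmul N n (Zop n j) (BB j))))
      + scal (of_real (qgr cp j)) (mmul N n (mmul N n (AA j) (proj n j)) (mmul N n \<rho> (mmul N n (proj n j) (BB j))))"
    by (subst PhiAA[OF j IH]) (simp add: mmul_add_left mmul_add_right mmul_scal_left mmul_scal_right mmul_assoc)
  also have "\<dots> = scal (of_real (qgr cp j)) ?Y"
    using j by (simp add: ZB AP PB mmul_zero_left mmul_zero_right scal_zero)
  finally have ph: "mmul N n (AA j) (mmul N n PH (BB j)) = scal (of_real (qgr cp j)) ?Y" .
  have c: "- \<i> * (complex_of_real (qfr hm j - qgr hp j) - complex_of_real (- qgr hp j)) -
      (complex_of_real (qfr cm j + qgr cp j) + complex_of_real (qgr cp j)) / 2 + of_real (qgr cp j)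
     = - \<i> * (complex_of_real (qfr hm j - qgr hp j) - complex_of_real (- qgr hp j)) - (complex_of_real (cm j) + complex_of_real 0) / 2"
    using j by (simp add: qfr_def field_simps)
  have nz: "- \<i> * (complex_of_real (qfr hm j - qgr hp j) - complex_of_real (- qgr hp j)) - (complex_of_real (cm j) + complex_of_real 0) / 2 \<noteq> 0"
    by (rule coef_nz) (use cpos[OF j] in simp)
  have "scal (- \<i> * (complex_of_real (qfr hm j - qgr hp j) - complex_of_real (- qgr hp j)) -
      (complex_of_real (qfr cm j + qgr cp j) + complex_of_real (qgr cp j)) / 2 + of_real (qgr cp j)) ?Y = 0"
    using core[OF AH[OF j'] HB[OF j'] AD[OF j'] DB[OF j']] ph by (simp add: scal_addc)
  then show ?thesis using nz c scal_eq0 by metis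
qed

end


definition Idop :: op where
  "Idop = outer (ket Mi) (ket Mi) + outer (ket Pl) (ket Pl) + (\<Sum>l\<in>{1..N}. proj n l)"

lemma Id_entry: "Idop i m = (if i = m \<and> i \<in> basis N n then 1 else 0)"
proof (cases i)
  case Mi then show ?thesis by (simp add: Idop_def outer_def ket_def op_sum_apply proj_def basis_def)
next
  case Pl then show ?thesis by (simp add: Idop_def outer_def ket_def op_sum_apply proj_def basis_def)
next
  case (Bs k a)
  have "(\<Sum>l\<in>{1..N}. proj n l i m) = (\<Sum>l\<in>{1..N}. if l = k then (if i = m \<and> a < n k then 1 else 0) else 0)"
    by (intro sum.cong) (auto simp: proj_def Bs)
  also have "\<dots> = (if i = m \<and> i \<in> basis N n then 1 else 0)" by (auto simp: Bs basis_def)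
  finally show ?thesis by (simp add: Idop_def outer_def ket_def op_sum_apply Bs)
qed

lemma mm_Id_right: "is_op N n A \<Longrightarrow> mmul N n A Idop = A"
proof (intro op_eqI)
  fix i m assume A: "is_op N n A"
  have "mmul N n A Idop i m = (\<Sum>l\<in>basis N n. if l = m then (if m \<in> basis N n then A i m else 0) else 0)"
    unfolding mmul_def by (intro sum.cong) (auto simp: Id_entry)
  also have "\<dots> = A i m" using A by (auto simp: finite_basis is_op_def)
  finally show "mmul N n A Idop i m = A i m" .
qed

lemma mm_Id_left: "is_op N n A \<Longrightarrow> mmul N n Idop A = A"
proof (intro op_eqI)
  fix i m assume A: "is_op N n A"
  have "mmul N n Idop A i m = (\<Sum>l\<in>basis N n. if l = i then (if i \<in> basis N n then A i m else 0) else 0)"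
    unfolding mmul_def by (intro sum.cong) (auto simp: Id_entry)
  also have "\<dots> = A i m" using A by (auto simp: finite_basis is_op_def)
  finally show "mmul N n Idop A i m = A i m" .
qed

lemma comm_P:
  assumes isop: "is_op N n \<rho>"
    and k1: "mmul N n \<rho> (outer (ket Mi) (ket Mi)) = 0" "mmul N n \<rho> (outer (ket Pl) (ket Pl)) = 0"
    and k2: "mmul N n (outer (ket Mi) (ket Mi)) \<rho> = 0" "mmul N n (outer (ket Pl) (ket Pl)) \<rho> = 0"
    and off: "\<And>j l. 1 \<le> j \<Longrightarrow> j \<le> N \<Longrightarrow> 1 \<le> l \<Longrightarrow> l \<le> N \<Longrightarrow> j \<noteq> l \<Longrightarrow> mmul N n (proj n j) (mmul N n \<rho> (proj n l)) = 0"
    and m: "1 \<le> m" "m \<le> N"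
  shows "mmul N n (proj n m) \<rho> = mmul N n (proj n m) (mmul N n \<rho> (proj n m))"
    "mmul N n \<rho> (proj n m) = mmul N n (proj n m) (mmul N n \<rho> (proj n m))"
proof -
  have "mmul N n (proj n m) \<rho> = mmul N n (proj n m) (mmul N n \<rho> Idop)" using mm_Id_right[OF isop] by simp
  also have "\<dots> = (\<Sum>l\<in>{1..N}. mmul N n (proj n m) (mmul N n \<rho> (proj n l)))"
    unfolding Idop_def by (simp add: mmul_add_right mmul_sum_right k1 mmul_zero_right)
  also have "\<dots> = (\<Sum>l\<in>{1..N}. if l = m then mmul N n (proj n m) (mmul N n \<rho> (proj n m)) else 0)"
    by (intro sum.cong) (use off m in auto)
  also have "\<dots> = mmul N n (proj n m) (mmul N n \<rho> (proj n m))" using m by simp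
  finally show "mmul N n (proj n m) \<rho> = mmul N n (proj n m) (mmul N n \<rho> (proj n m))" .
  have "mmul N n \<rho> (proj n m) = mmul N n Idop (mmul N n \<rho> (proj n m))" using mm_Id_left[OF isop] by (simp add: mmul_assoc[symmetric])
  also have "\<dots> = (\<Sum>l\<in>{1..N}. mmul N n (proj n l) (mmul N n \<rho> (proj n m)))"
    unfolding Idop_def by (simp add: mmul_add_left mmul_sum_left k2 mmul_zero_left flip: mmul_assoc)
  also have "\<dots> = (\<Sum>l\<in>{1..N}. if l = m then mmul N n (proj n m) (mmul N n \<rho> (proj n m)) else 0)"
    by (intro sum.cong) (use off m in auto)
  also have "\<dots> = mmul N n (proj n m) (mmul N n \<rho> (proj n m))" using m by simp
  finally show "mmul N n \<rho> (proj n m) = mmul N n (proj n m) (mmul N n \<rho> (proj n m))" .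
qed

lemma comm_Q:
  assumes herm: "adj \<rho> = \<rho>" and k: "1 \<le> k" "k < N"
    and Pc: "mmul N n (proj n k) \<rho> = mmul N n (proj n k) (mmul N n \<rho> (proj n k))"
    and AB: "mmul N n (absZ N n k) (mmul N n \<rho> (proj n k - absZ N n k)) = 0"
  shows "mmul N n (absZ N n k) \<rho> = mmul N n (absZ N n k) (mmul N n \<rho> (absZ N n k))"
    "mmul N n \<rho> (absZ N n k) = mmul N n (absZ N n k) (mmul N n \<rho> (absZ N n k))"
proof -
  have k': "1 \<le> k" "k \<le> N" using k by auto
  have "mmul N n (absZ N n k) \<rho> = mmul N n (mmul N n (absZ N n k) (proj n k)) \<rho>" using AP[OF k'] by simp
  also have "\<dots> = mmul N n (absZ N n k) (mmul N n (proj n k) (mmul N n \<rho> (proj n k)))" by (simp add: mmul_assoc Pc)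
  also have "\<dots> = mmul N n (absZ N n k) (mmul N n \<rho> (proj n k))" by (simp add: AP[OF k'] flip: mmul_assoc)
  also have "\<dots> = mmul N n (absZ N n k) (mmul N n \<rho> (absZ N n k))"
    using AB by (simp add: mmul_diff_right)
  finally show 1: "mmul N n (absZ N n k) \<rho> = mmul N n (absZ N n k) (mmul N n \<rho> (absZ N n k))" .
  have "mmul N n \<rho> (absZ N n k) = adj (mmul N n (absZ N n k) \<rho>)" by (simp add: adj_mmul herm adj_absZ)
  also have "\<dots> = mmul N n (absZ N n k) (mmul N n \<rho> (absZ N n k))" unfolding 1
    by (simp add: adj_mmul herm adj_absZ mmul_assoc)
  finally show "mmul N n \<rho> (absZ N n k) = mmul N n (absZ N n k) (mmul N n \<rho> (absZ N n k))" .
qed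


lemma Wop_comm:
  assumes "\<And>k. 1 \<le> k \<Longrightarrow> k < N \<Longrightarrow> mmul N n \<rho> (absZ N n k) = mmul N n (absZ N n k) \<rho> \<and>
        mmul N n \<rho> (proj n (Suc k)) = mmul N n (proj n (Suc k)) \<rho>"
  shows "mmul N n (Wop f g) \<rho> = mmul N n \<rho> (Wop f g)"
  unfolding Wop_def mmul_sum_left mmul_sum_right
  by (intro sum.cong refl) (use assms in \<open>auto simp: mmul_add_left mmul_add_right mmul_scal_left mmul_scal_right\<close>)

lemma conv_term:
  assumes k: "1 \<le> k" "k < N" and pos: "0 < cm" "0 < cp"
    and cQ: "mmul N n \<rho> (absZ N n k) = mmul N n (absZ N n k) \<rho>"
    and cP: "mmul N n \<rho> (proj n (Suc k)) = mmul N n (proj n (Suc k)) \<rho>"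
    and rel: "mmul N n (mmul N n (adj (Zop n k)) \<rho>) (Zop n k) = scal (of_real (cm / cp)) (mmul N n \<rho> (absZ N n k))"
  shows "scal (of_real cm) (mmul N n (mmul N n (Zop n k) \<rho>) (adj (Zop n k))) = scal (of_real cp) (mmul N n (proj n (Suc k)) \<rho>)"
    "scal (of_real cp) (mmul N n (mmul N n (adj (Zop n k)) \<rho>) (Zop n k)) = scal (of_real cm) (mmul N n (absZ N n k) \<rho>)"
proof -
  have cc: "complex_of_real cp * complex_of_real (cm / cp) = complex_of_real cm"
  proof -
    have "cp * (cm / cp) = cm" using pos by simp
    then show ?thesis by (metis of_real_mult)
  qed
  show "scal (of_real cp) (mmul N n (mmul N n (adj (Zop n k)) \<rho>) (Zop n k)) = scal (of_real cm) (mmul N n (absZ N n k) \<rho>)"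
    unfolding rel scal_scal cc cQ ..
  have sk: "1 \<le> Suc k" "Suc k \<le> N" using k by auto
  have "scal (of_real (cm / cp)) (mmul N n (mmul N n (Zop n k) \<rho>) (adj (Zop n k)))
     = scal (of_real (cm / cp)) (mmul N n (Zop n k) (mmul N n (mmul N n \<rho> (absZ N n k)) (adj (Zop n k))))"
    by (simp add: mmul_assoc QZs[OF k])
  also have "\<dots> = mmul N n (Zop n k) (mmul N n (mmul N n (mmul N n (adj (Zop n k)) \<rho>) (Zop n k)) (adj (Zop n k)))"
    unfolding rel by (simp add: mmul_scal_left mmul_scal_right)
  also have "\<dots> = mmul N n (mmul N n (Zop n k) (adj (Zop n k))) (mmul N n \<rho> (mmul N n (Zop n k) (adj (Zop n k))))"
    by (simp add: mmul_assoc)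
  also have "\<dots> = mmul N n (proj n (Suc k)) \<rho>"
    using k by (simp add: ZZ cP PP[OF sk sk] flip: mmul_assoc)
  finally have e: "scal (of_real (cm / cp)) (mmul N n (mmul N n (Zop n k) \<rho>) (adj (Zop n k))) = mmul N n (proj n (Suc k)) \<rho>" .
  have "scal (of_real cm) (mmul N n (mmul N n (Zop n k) \<rho>) (adj (Zop n k))) =
     scal (of_real cp) (scal (of_real (cm / cp)) (mmul N n (mmul N n (Zop n k) \<rho>) (adj (Zop n k))))"
    unfolding scal_scal cc ..
  then show "scal (of_real cm) (mmul N n (mmul N n (Zop n k) \<rho>) (adj (Zop n k))) = scal (of_real cp) (mmul N n (proj n (Suc k)) \<rho>)"
    unfolding e .
qed

lemma converse:
  assumes pos: "\<And>k. 1 \<le> k \<Longrightarrow> k < N \<Longrightarrow> 0 < cm k \<and> 0 < cp k"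
    and cond: "\<And>k. 1 \<le> k \<Longrightarrow> k < N \<Longrightarrow> mmul N n \<rho> (absZ N n k) = mmul N n (absZ N n k) \<rho> \<and>
        mmul N n \<rho> (proj n (Suc k)) = mmul N n (proj n (Suc k)) \<rho> \<and>
        mmul N n (mmul N n (adj (Zop n k)) \<rho>) (Zop n k) = scal (of_real (cm k / cp k)) (mmul N n \<rho> (absZ N n k))"
  shows "Xop (Wop (\<lambda>k. of_real (hm k)) (\<lambda>k. - of_real (hp k))) (Wop (\<lambda>k. of_real (cm k)) (\<lambda>k. of_real (cp k)))
              (Phi (\<lambda>k. of_real (cm k)) (\<lambda>k. of_real (cp k)) \<rho>) \<rho> = 0"
proof -
  let ?H = "Wop (\<lambda>k. of_real (hm k)) (\<lambda>k. - of_real (hp k))"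
  let ?D = "Wop (\<lambda>k. of_real (cm k)) (\<lambda>k. of_real (cp k))"
  have c1: "mmul N n ?H \<rho> = mmul N n \<rho> ?H" by (rule Wop_comm) (use cond in blast)
  have c2: "mmul N n \<rho> ?D = mmul N n ?D \<rho>" by (rule Wop_comm[symmetric]) (use cond in blast)
  have ph: "Phi (\<lambda>k. of_real (cm k)) (\<lambda>k. of_real (cp k)) \<rho> = mmul N n ?D \<rho>"
    unfolding Phi_def Wop_def mmul_sum_left
  proof (intro sum.cong refl)
    fix k assume "k \<in> {1..N-1}"
    then have k: "1 \<le> k" "k < N" by auto
    note ct = conv_term[OF k pos[OF k, THEN conjunct1] pos[OF k, THEN conjunct2] cond[OF k, THEN conjunct1]
        cond[OF k, THEN conjunct2, THEN conjunct1] cond[OF k, THEN conjunct2, THEN conjunct2]]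
    show "scal (of_real (cm k)) (mmul N n (mmul N n (Zop n k) \<rho>) (adj (Zop n k))) +
         scal (of_real (cp k)) (mmul N n (mmul N n (adj (Zop n k)) \<rho>) (Zop n k)) =
         mmul N n (scal (of_real (cm k)) (absZ N n k) + scal (of_real (cp k)) (proj n (Suc k))) \<rho>"
      unfolding ct mmul_add_left mmul_scal_left by (simp add: add.commute)
  qed
  show ?thesis unfolding Xop_def c1 c2 ph
    by (intro op_eqI) (simp add: scal_def)
qed


lemma dissip_eq: "dissip N n L \<rho> = mmul N n (mmul N n L \<rho>) (adj L)
    - scal (1/2) (mmul N n (mmul N n (adj L) L) \<rho> + mmul N n \<rho> (mmul N n (adj L) L))"
  unfolding dissip_def scal_def by (intro op_eqI) (simp add: field_simps)

lemma dissip_zero: "mmul N n L \<rho> = 0 \<Longrightarrow> mmul N n \<rho> (adj L) = 0 \<Longrightarrow> dissip N n L \<rho> = 0"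
  unfolding dissip_eq by (simp add: mmul_assoc mmul_zero_left mmul_zero_right scal_zero flip: mmul_assoc[of N n \<rho>])

lemma dissip_outer:
  assumes "\<And>m. (\<Sum>l\<in>basis N n. cnj (u l) * \<rho> l m) = 0" "adj \<rho> = \<rho>"
  shows "dissip N n (scal c (outer x u)) \<rho> = 0"
  by (rule dissip_zero) (simp_all add: mmul_scal_left mmul_scal_right adj_scal adj_outer kill_left[OF assms(1)] kill_right[OF assms] scal_zero)

lemma dissip_sq:
  assumes "0 \<le> G"
  shows "dissip N n (scal (of_real (sqrt G)) Y) \<rho> = scal (of_real G) (mmul N n (mmul N n Y \<rho>) (adj Y))
    - scal (1/2) (scal (of_real G) (mmul N n (mmul N n (adj Y) Y) \<rho>) + scal (of_real G) (mmul N n \<rho> (mmul N n (adj Y) Y)))"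
proof -
  have ss: "complex_of_real (sqrt G) * complex_of_real (sqrt G) = complex_of_real G"
    using assms by (metis of_real_mult real_sqrt_mult_self abs_of_nonneg)
  show ?thesis unfolding dissip_eq
    by (simp add: adj_scal mmul_scal_left mmul_scal_right scal_scal ss)
qed

lemma Heff_eq: "Heff N n em ep e gp gm =
    scal (of_nat (n 1) * of_real (gm (omega_p ep e))) (outer (ket Pl) (ket Pl))
  - scal (of_nat (n 1) * of_real (gp (omega_p ep e))) (outer (phi n 1 0) (phi n 1 0))
  + scal (of_real (gm (omega_m N em e))) (outer (phi n N 0) (phi n N 0))
  - scal (of_real (gp (omega_m N em e))) (outer (ket Mi) (ket Mi))
  + Wop (\<lambda>k. of_real (gm (omega e k))) (\<lambda>k. - of_real (gp (omega e k)))"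
  unfolding Heff_def Wop_def scal_def by (intro op_eqI) (simp add: op_sum_apply)

lemma gen_eq:
  assumes herm: "adj \<rho> = \<rho>"
    and K: "\<And>u m. u \<in> {ket Mi, ket Pl, phi n 1 0, phi n N 0} \<Longrightarrow> (\<Sum>l\<in>basis N n. cnj (u l) * \<rho> l m) = 0"
    and G: "\<And>k. 1 \<le> k \<Longrightarrow> k < N \<Longrightarrow> 0 < Gp (omega e k) \<and> 0 < Gm (omega e k)"
  shows "gen N n em ep e Gp Gm gp gm \<rho> = Xop (Wop (\<lambda>k. of_real (gm (omega e k))) (\<lambda>k. - of_real (gp (omega e k))))
     (Wop (\<lambda>k. of_real (Gm (omega e k))) (\<lambda>k. of_real (Gp (omega e k))))
     (Phi (\<lambda>k. of_real (Gm (omega e k))) (\<lambda>k. of_real (Gp (omega e k))) \<rho>) \<rho>"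
proof -
  let ?H = "Wop (\<lambda>k. of_real (gm (omega e k))) (\<lambda>k. - of_real (gp (omega e k)))"
  let ?D = "Wop (\<lambda>k. of_real (Gm (omega e k))) (\<lambda>k. of_real (Gp (omega e k)))"
  let ?Ph = "Phi (\<lambda>k. of_real (Gm (omega e k))) (\<lambda>k. of_real (Gp (omega e k))) \<rho>"
  have KM: "\<And>m. (\<Sum>l\<in>basis N n. cnj (ket Mi l) * \<rho> l m) = 0" and KP: "\<And>m. (\<Sum>l\<in>basis N n. cnj (ket Pl l) * \<rho> l m) = 0"
    and K1: "\<And>m. (\<Sum>l\<in>basis N n. cnj (phi n 1 0 l) * \<rho> l m) = 0" and KN: "\<And>m. (\<Sum>l\<in>basis N n. cnj (phi n N 0 l) * \<rho> l m) = 0"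
    using K by auto
  have H1: "mmul N n (Heff N n em ep e gp gm) \<rho> = mmul N n ?H \<rho>"
    unfolding Heff_eq mmul_add_left mmul_diff_left mmul_scal_left kill_left[OF KM] kill_left[OF KP]
        kill_left[OF K1] kill_left[OF KN] by (simp add: scal_zero)
  have H2: "mmul N n \<rho> (Heff N n em ep e gp gm) = mmul N n \<rho> ?H"
    unfolding Heff_eq mmul_add_right mmul_diff_right mmul_scal_right kill_right[OF KM herm] kill_right[OF KP herm]
        kill_right[OF K1 herm] kill_right[OF KN herm] by (simp add: scal_zero)
  have d1: "dissip N n (L_m_wp n ep e Gm) \<rho> = 0" unfolding L_m_wp_def by (rule dissip_outer[OF KP herm])
  have d2: "dissip N n (L_p_wp n ep e Gp) \<rho> = 0" unfolding L_p_wp_def by (rule dissip_outer[OF K1 herm])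
  have d3: "dissip N n (L_m_wm N n em e Gm) \<rho> = 0" unfolding L_m_wm_def by (rule dissip_outer[OF KN herm])
  have d4: "dissip N n L_p_wm \<rho> = 0"
    by (rule dissip_zero) (simp_all add: L_p_wm_def adj_def mmul_def zero_fun_def)
  define T where "T k = scal (of_real (Gm (omega e k))) (mmul N n (mmul N n (Zop n k) \<rho>) (adj (Zop n k)))
       + scal (of_real (Gp (omega e k))) (mmul N n (mmul N n (adj (Zop n k)) \<rho>) (Zop n k))
       - scal (1/2) (mmul N n (scal (of_real (Gm (omega e k))) (absZ N n k) + scal (of_real (Gp (omega e k))) (proj n (Suc k))) \<rho>
          + mmul N n \<rho> (scal (of_real (Gm (omega e k))) (absZ N n k) + scal (of_real (Gp (omega e k))) (proj n (Suc k))))" for k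
  have dk: "dissip N n (L_m_wk n e Gm k) \<rho> + dissip N n (L_p_wk n e Gp k) \<rho> = T k" if k: "k \<in> {1..N-1}" for k
  proof -
    have k': "1 \<le> k" "k < N" using k by auto
    have g: "0 \<le> Gm (omega e k)" "0 \<le> Gp (omega e k)" using G[OF k'] by auto
    show ?thesis unfolding L_m_wk_def L_p_wk_def dissip_sq[OF g(1)] dissip_sq[OF g(2)] T_def adj_adj absZ_def[symmetric] ZZ[OF k']
      unfolding scal_def mmul_def by (intro op_eqI) (simp add: algebra_simps sum.distrib sum_distrib_left)
  qed
  have sT: "(\<Sum>k\<in>{1..N-1}. T k) = ?Ph - scal (1/2) (mmul N n ?D \<rho> + mmul N n \<rho> ?D)"
  proof -
    have aux: "scal (1/2) (mmul N n ?D \<rho> + mmul N n \<rho> ?D) = (\<Sum>k\<in>{1..N-1}. scal (1/2) (mmul N n (scal (of_real (Gm (omega e k))) (absZ N n k) + scal (of_real (Gp (omega e k))) (proj n (Suc k))) \<rho>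
          + mmul N n \<rho> (scal (of_real (Gm (omega e k))) (absZ N n k) + scal (of_real (Gp (omega e k))) (proj n (Suc k)))))"
      by (simp only: Wop_def mmul_sum_left mmul_sum_right sum.distrib[symmetric] scal_sum)
    show ?thesis unfolding aux Phi_def T_def by (simp only: sum_subtractf)
  qed
  have "gen N n em ep e Gp Gm gp gm \<rho> = scal (- \<i>) (mmul N n (Heff N n em ep e gp gm) \<rho> - mmul N n \<rho> (Heff N n em ep e gp gm))
      + (\<Sum>k\<in>{1..N-1}. dissip N n (L_m_wk n e Gm k) \<rho> + dissip N n (L_p_wk n e Gp k) \<rho>)"
    unfolding gen_def by (intro op_eqI) (simp add: d1 d2 d3 d4 scal_def op_sum_apply)
  also have "\<dots> = scal (- \<i>) (mmul N n ?H \<rho> - mmul N n \<rho> ?H) + (\<Sum>k\<in>{1..N-1}. T k)"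
    unfolding H1 H2 using dk by simp
  also have "\<dots> = Xop ?H ?D ?Ph \<rho>" unfolding sT Xop_def
    by (intro op_eqI) simp
  finally show ?thesis .
qed


lemma HS_eq: "HS N n em ep e = scal (of_real em) (outer (ket Mi) (ket Mi)) + scal (of_real ep) (outer (ket Pl) (ket Pl))
    + (\<Sum>k\<in>{1..N}. scal (of_real (e k)) (proj n k))"
  unfolding HS_def scal_def by (intro op_eqI) (simp add: op_sum_apply)

lemma HS_comm:
  assumes isop: "is_op N n \<rho>" and N1: "1 \<le> N"
    and k1: "mmul N n \<rho> (outer (ket Mi) (ket Mi)) = 0" "mmul N n \<rho> (outer (ket Pl) (ket Pl)) = 0"
    and k2: "mmul N n (outer (ket Mi) (ket Mi)) \<rho> = 0" "mmul N n (outer (ket Pl) (ket Pl)) \<rho> = 0"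
    and cP: "\<And>k. 1 \<le> k \<Longrightarrow> k < N \<Longrightarrow> mmul N n \<rho> (proj n (Suc k)) = mmul N n (proj n (Suc k)) \<rho>"
  shows "mmul N n \<rho> (HS N n em ep e) = mmul N n (HS N n em ep e) \<rho>"
proof -
  have c2: "mmul N n \<rho> (proj n l) = mmul N n (proj n l) \<rho>" if "l \<in> {2..N}" for l
    using cP[of "l - 1"] that by (cases l) auto
  have "\<rho> = mmul N n \<rho> Idop" using mm_Id_right[OF isop] by simp
  also have "\<dots> = (\<Sum>l\<in>{1..N}. mmul N n \<rho> (proj n l))"
    unfolding Idop_def by (simp add: mmul_add_right mmul_sum_right k1)
  also have "\<dots> = mmul N n \<rho> (proj n 1) + (\<Sum>l\<in>{2..N}. mmul N n \<rho> (proj n l))"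
    using N1 by (simp add: sum.atLeast_Suc_atMost numeral_2_eq_2)
  finally have e1: "\<rho> = mmul N n \<rho> (proj n 1) + (\<Sum>l\<in>{2..N}. mmul N n (proj n l) \<rho>)"
    using c2 by simp
  have "\<rho> = mmul N n Idop \<rho>" using mm_Id_left[OF isop] by simp
  also have "\<dots> = (\<Sum>l\<in>{1..N}. mmul N n (proj n l) \<rho>)"
    unfolding Idop_def by (simp add: mmul_add_left mmul_sum_left k2)
  also have "\<dots> = mmul N n (proj n 1) \<rho> + (\<Sum>l\<in>{2..N}. mmul N n (proj n l) \<rho>)"
    using N1 by (simp add: sum.atLeast_Suc_atMost numeral_2_eq_2)
  finally have e2: "\<rho> = mmul N n (proj n 1) \<rho> + (\<Sum>l\<in>{2..N}. mmul N n (proj n l) \<rho>)" .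
  have c1: "mmul N n \<rho> (proj n 1) = mmul N n (proj n 1) \<rho>" using e1 e2 by (metis add_right_cancel)
  have call: "mmul N n \<rho> (proj n l) = mmul N n (proj n l) \<rho>" if "l \<in> {1..N}" for l
    using c1 c2[of l] that by (cases "l = 1") auto
  show ?thesis unfolding HS_eq
    by (simp add: mmul_add_left mmul_add_right mmul_scal_left mmul_scal_right mmul_sum_left mmul_sum_right k1 k2 scal_zero)
      (intro sum.cong refl, simp add: call)
qed

end



theorem theorem3p7:
  fixes N :: nat and n :: "nat \<Rightarrow> nat"
    and em ep :: real and e :: "nat \<Rightarrow> real"
    and Gp Gm gp gm :: "real \<Rightarrow> real"
    and \<rho> :: op
  assumes N2: "N \<ge> 2"
    and n_mono: "\<And>k. 1 \<le> k \<Longrightarrow> k < N \<Longrightarrow> n (Suc k) \<le> n k"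
    and n_pos: "\<And>k. 1 \<le> k \<Longrightarrow> k \<le> N \<Longrightarrow> 1 \<le> n k"
    and e_dist: "inj_on e {1..N}" "\<And>k. 1 \<le> k \<Longrightarrow> k \<le> N \<Longrightarrow> e k \<noteq> em \<and> e k \<noteq> ep" "em \<noteq> ep"
    and e_order: "\<And>k. 1 \<le> k \<Longrightarrow> k < N \<Longrightarrow> em < e (Suc k) \<and> e (Suc k) < e k \<and> e k < ep"
    and w_dist: "omega_p ep e \<noteq> omega_m N em e" "inj_on (omega e) {1..N-1}"
      "\<And>k. 1 \<le> k \<Longrightarrow> k < N \<Longrightarrow> omega e k \<noteq> omega_p ep e \<and> omega e k \<noteq> omega_m N em e"
    and G_pos: "\<And>w. w \<in> {omega_p ep e, omega_m N em e} \<union> omega e ` {1..N-1} \<Longrightarrow> 0 < Gp w \<and> 0 < Gm w"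
    and state: "is_state N n \<rho>"
    and supp: "supported_Omega N n \<rho>"
  shows "(invariant N n em ep e Gp Gm gp gm \<rho> \<longleftrightarrow>
           (\<forall>k\<in>{1..N-1}. commutes N n \<rho> (absZ N n k) \<and> commutes N n \<rho> (proj n (Suc k))
              \<and> mmul N n (mmul N n (adj (Zop n k)) \<rho>) (Zop n k)
                  = scal (of_real (exp (beta e Gp Gm k))) (mmul N n \<rho> (absZ N n k))))
       \<and> (invariant N n em ep e Gp Gm gp gm \<rho> \<longrightarrow> commutes N n \<rho> (HS N n em ep e))"
proof -
  have isop: "is_op N n \<rho>" using state by (simp add: is_state_def)
  have herm: "adj \<rho> = \<rho>" by (rule state_herm[OF state])
  have K: "\<And>u m. u \<in> {ket Mi, ket Pl, phi n 1 0, phi n N 0} \<Longrightarrow> (\<Sum>l\<in>basis N n. cnj (u l) * \<rho> l m) = 0"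
    using supp_left[OF supp isop] by blast
  have KM: "\<And>m. (\<Sum>l\<in>basis N n. cnj (ket Mi l) * \<rho> l m) = 0" and KP: "\<And>m. (\<Sum>l\<in>basis N n. cnj (ket Pl l) * \<rho> l m) = 0"
    using K by auto
  have k1: "mmul N n \<rho> (outer (ket Mi) (ket Mi)) = 0" "mmul N n \<rho> (outer (ket Pl) (ket Pl)) = 0"
    using kill_right[OF KM herm] kill_right[OF KP herm] by auto
  have k2: "mmul N n (outer (ket Mi) (ket Mi)) \<rho> = 0" "mmul N n (outer (ket Pl) (ket Pl)) \<rho> = 0"
    using kill_left[OF KM] kill_left[OF KP] by auto
  have G: "\<And>k. 1 \<le> k \<Longrightarrow> k < N \<Longrightarrow> 0 < Gp (omega e k) \<and> 0 < Gm (omega e k)"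
    using G_pos by auto
  have cpos: "\<And>k. 1 \<le> k \<Longrightarrow> k < N \<Longrightarrow> 0 < Gm (omega e k) \<and> 0 < Gp (omega e k)"
    using G by auto
  have eb: "exp (beta e Gp Gm k) = Gm (omega e k) / Gp (omega e k)" if "1 \<le> k" "k < N" for k
    using G[OF that] unfolding beta_def by simp
  have geq: "gen N n em ep e Gp Gm gp gm \<rho> = Xop N n (Wop N n (\<lambda>k. of_real (gm (omega e k))) (\<lambda>k. - of_real (gp (omega e k))))
     (Wop N n (\<lambda>k. of_real (Gm (omega e k))) (\<lambda>k. of_real (Gp (omega e k))))
     (Phi N n (\<lambda>k. of_real (Gm (omega e k))) (\<lambda>k. of_real (Gp (omega e k))) \<rho>) \<rho>"
    apply (rule gen_eq)
        apply (rule n_mono; assumption)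
       apply (rule n_pos; assumption)
      apply (rule herm)
     apply (rule K; assumption)
    apply (rule G; assumption)
    done
  have inv_iff: "invariant N n em ep e Gp Gm gp gm \<rho> \<longleftrightarrow> Xop N n (Wop N n (\<lambda>k. of_real (gm (omega e k))) (\<lambda>k. - of_real (gp (omega e k))))
     (Wop N n (\<lambda>k. of_real (Gm (omega e k))) (\<lambda>k. of_real (Gp (omega e k))))
     (Phi N n (\<lambda>k. of_real (Gm (omega e k))) (\<lambda>k. of_real (Gp (omega e k))) \<rho>) \<rho> = 0"
    unfolding invariant_def geq by (simp add: zero_fun_def)
  define C where "C k \<longleftrightarrow> commutes N n \<rho> (absZ N n k) \<and> commutes N n \<rho> (proj n (Suc k))
              \<and> mmul N n (mmul N n (adj (Zop n k)) \<rho>) (Zop n k)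
                  = scal (of_real (exp (beta e Gp Gm k))) (mmul N n \<rho> (absZ N n k))" for k
  have fwd: "\<forall>k\<in>{1..N-1}. C k" if inv: "invariant N n em ep e Gp Gm gp gm \<rho>"
  proof
    fix k assume "k \<in> {1..N-1}"
    then have k: "1 \<le> k" "k < N" by auto
    have X0: "Xop N n (Wop N n (\<lambda>k. of_real (gm (omega e k))) (\<lambda>k. - of_real (gp (omega e k))))
     (Wop N n (\<lambda>k. of_real (Gm (omega e k))) (\<lambda>k. of_real (Gp (omega e k))))
     (Phi N n (\<lambda>k. of_real (Gm (omega e k))) (\<lambda>k. of_real (Gp (omega e k))) \<rho>) \<rho> = 0"
      using inv inv_iff by simp
    note off = offdiag[where N=N and n=n, OF n_mono n_pos N2 cpos X0]
    have cPall: "mmul N n (proj n m) \<rho> = mmul N n (proj n m) (mmul N n \<rho> (proj n m))"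
        "mmul N n \<rho> (proj n m) = mmul N n (proj n m) (mmul N n \<rho> (proj n m))" if "1 \<le> m" "m \<le> N" for m
      using comm_P[where N=N and n=n, OF n_mono n_pos isop k1 k2 off that] by auto
    have cQ: "mmul N n (absZ N n k) \<rho> = mmul N n (absZ N n k) (mmul N n \<rho> (absZ N n k))"
        "mmul N n \<rho> (absZ N n k) = mmul N n (absZ N n k) (mmul N n \<rho> (absZ N n k))"
      using comm_Q[where N=N and n=n, OF n_mono n_pos herm k cPall(1)[of k] AB0[where N=N and n=n, OF n_mono n_pos N2 cpos X0 k]] k by auto
    have dg: "scal (of_real (Gm (omega e k))) (mmul N n (absZ N n k) (mmul N n \<rho> (absZ N n k)))
           = scal (of_real (Gp (omega e k))) (mmul N n (mmul N n (adj (Zop n k)) \<rho>) (Zop n k))"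
      by (rule diag[where N=N and n=n, OF n_mono n_pos N2 cpos X0 k])
    have gp0: "complex_of_real (Gp (omega e k)) \<noteq> 0" using G[OF k] by simp
    have "mmul N n (mmul N n (adj (Zop n k)) \<rho>) (Zop n k)
        = scal (1 / of_real (Gp (omega e k))) (scal (of_real (Gp (omega e k))) (mmul N n (mmul N n (adj (Zop n k)) \<rho>) (Zop n k)))"
      using gp0 by (simp add: scal_scal scal_one)
    also have "\<dots> = scal (of_real (exp (beta e Gp Gm k))) (mmul N n \<rho> (absZ N n k))"
      unfolding dg[symmetric] scal_scal cQ(2)[symmetric] eb[OF k] by (simp add: field_simps)
    finally have rel: "mmul N n (mmul N n (adj (Zop n k)) \<rho>) (Zop n k) = scal (of_real (exp (beta e Gp Gm k))) (mmul N n \<rho> (absZ N n k))" .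
    have sk: "1 \<le> Suc k" "Suc k \<le> N" using k by auto
    show "C k" unfolding C_def commutes_def using rel cQ cPall[OF sk] by simp
  qed
  have bwd: "invariant N n em ep e Gp Gm gp gm \<rho>" if c: "\<forall>k\<in>{1..N-1}. C k"
    unfolding inv_iff
  proof (rule converse[where N=N and n=n, OF n_mono n_pos cpos])
    fix k assume k: "1 \<le> k" "k < N"
    then have "C k" using c by auto
    then show "mmul N n \<rho> (absZ N n k) = mmul N n (absZ N n k) \<rho> \<and>
        mmul N n \<rho> (proj n (Suc k)) = mmul N n (proj n (Suc k)) \<rho> \<and>
        mmul N n (mmul N n (adj (Zop n k)) \<rho>) (Zop n k) = scal (of_real (Gm (omega e k) / Gp (omega e k))) (mmul N n \<rho> (absZ N n k))"
      unfolding C_def commutes_def eb[OF k] by simp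
  qed
  have hs: "commutes N n \<rho> (HS N n em ep e)" if c: "\<forall>k\<in>{1..N-1}. C k"
    unfolding commutes_def
  proof (rule HS_comm[where N=N and n=n, OF n_mono n_pos isop _ k1 k2])
    show "1 \<le> N" using N2 by simp
    fix k assume k: "1 \<le> k" "k < N"
    then show "mmul N n \<rho> (proj n (Suc k)) = mmul N n (proj n (Suc k)) \<rho>" using c unfolding C_def commutes_def by auto
  qed
  show ?thesis using fwd bwd hs unfolding C_def by blast
qed

end
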